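(* Let $d\ge 3$, $F \leq F' \leq \mathrm{Sym}(\Omega)$ with $F'$ preserving each $F$-orbit in $\Omega$, and $n = [F':F]$. Let $G(F,F')$ act on $X_{n,d}$ via the embedding $\varphi$, i.e. $\gamma \cdot (f,e) = (f^\gamma, \gamma e)$ with $(f^\gamma)_v = \alpha(\sigma(\gamma,\gamma^{-1}v)) \cdot f_{\gamma^{-1}v}$. Then: (a) $G(F,F')^\ast$ acts on the vertex set of $X_{n,d}$ with finitely many orbits; if $F$ is transitive on $\Omega$, then $G(F,F')^\ast$ acts transitively on the vertices of $X_{n,d}$. (b) For every $e \in E_d$, the stabilizer of the vertex $((0),e)$ in $G(F,F')$ equals the stabilizer of $e$ in $U(F)$. In particular the action of $G(F,F')$ on $X_{n,d}$ is proper. Consequently, when $F$ is regular, $G(F,F')^\ast$ acts freely and transitively on the vertices of $X_{n,d}$.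
   Context: $\Omega$ is a set with $|\Omega|=d$; $T_d$ is the $d$-regular tree with vertex set $V_d$, edge set $E_d$, with a coloring $c: E_d\to\Omega$ restricting at each vertex $v$ to a bijection from the set $E(v)$ of edges at $v$ onto $\Omega$. Local permutation: $\sigma(g,v) = c|_{E(gv)} \circ g \circ (c|_{E(v)})^{-1}$. $U(F)$: automorphisms with all local permutations in $F$. $G(F,F')$: automorphisms with all local permutations in $F'$ and all but finitely many in $F$, with the topology making the inclusion of $U(F)$ continuous and open; $G(F,F')^\ast$ is its index-two subgroup preserving the bipartition of $T_d$. A permutation group is semi-regular if point stabilizers are trivial, regular if transitive and semi-regular. $\Sigma_n=\{0,\dots,n-1\}$, $\mathfrak S_n=\mathrm{Sym}(\Sigma_n)$; $\alpha: F' \to \mathfrak{S}_n$ is the action of $F'$ on $F'/F$ transported via a fixed bijection $\Sigma_n \to F'/F$ with $0 \mapsto F$. The graph $X_{n,d}$ has vertex set $\Sigma_n^{(V_d)} \times E_d$ ($\Sigma_n^{(V_d)}$ the finitely supported functions $f: V_d\to\Sigma_n$); $(f,e)\sim(f,e')$ (type 1) if $e,e'$ share exactly one vertex, and $(f,e)\sim(f',e)$ (type 2) if $f'$ differs from $f$ at exactly one vertex, which lies in $e$. $(0)$ denotes the zero function. *)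

theory Defs
  imports "HOL-Analysis.Analysis" "HOL-Combinatorics.Permutations"
begin

text \<open>Omega = {..<d}. Vertices of T_d: reduced words over Omega; the edges are
  {w, w @ [a]}, coloured by a. At every vertex the colouring is a bijection onto Omega.\<close>

definition Verts :: "nat \<Rightarrow> nat list set" where
  "Verts d = {w. set w \<subseteq> {..<d} \<and> (\<forall>i. Suc i < length w \<longrightarrow> w ! i \<noteq> w ! Suc i)}"

definition Edges :: "nat \<Rightarrow> nat list set set" where
  "Edges d = {{w, w @ [a]} | w a. w @ [a] \<in> Verts d}"

definition ecol :: "nat list set \<Rightarrow> nat" where
  "ecol e = (THE a. \<exists>w. e = {w, w @ [a]})"

definition nb :: "nat list \<Rightarrow> nat \<Rightarrow> nat list" where
  "nb v a = (if v \<noteq> [] \<and> last v = a then butlast v else v @ [a])"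

text \<open>automorphisms of T_d (extended by the identity outside the vertex set)\<close>
definition aut :: "nat \<Rightarrow> (nat list \<Rightarrow> nat list) \<Rightarrow> bool" where
  "aut d g \<longleftrightarrow> bij_betw g (Verts d) (Verts d)
     \<and> (\<forall>v\<in>Verts d. \<forall>w\<in>Verts d. {g v, g w} \<in> Edges d \<longleftrightarrow> {v, w} \<in> Edges d)
     \<and> (\<forall>x. x \<notin> Verts d \<longrightarrow> g x = x)"

text \<open>local permutation sigma(g,v) = c|E(gv) o g o (c|E(v))^-1, as a permutation of {..<d}\<close>
definition locperm :: "nat \<Rightarrow> (nat list \<Rightarrow> nat list) \<Rightarrow> nat list \<Rightarrow> nat \<Rightarrow> nat" where
  "locperm d g v = (\<lambda>a. if a < d then ecol (g ` {v, nb v a}) else a)"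

definition perm_group :: "nat \<Rightarrow> (nat \<Rightarrow> nat) set \<Rightarrow> bool" where
  "perm_group d F \<longleftrightarrow> F \<subseteq> {p. p permutes {..<d}} \<and> id \<in> F
     \<and> (\<forall>p\<in>F. \<forall>q\<in>F. p \<circ> q \<in> F) \<and> (\<forall>p\<in>F. inv p \<in> F)"

definition transitive_on :: "nat \<Rightarrow> (nat \<Rightarrow> nat) set \<Rightarrow> bool" where
  "transitive_on d F \<longleftrightarrow> (\<forall>a<d. \<forall>b<d. \<exists>p\<in>F. p a = b)"

definition semiregular_on :: "nat \<Rightarrow> (nat \<Rightarrow> nat) set \<Rightarrow> bool" where
  "semiregular_on d F \<longleftrightarrow> (\<forall>p\<in>F. \<forall>a<d. p a = a \<longrightarrow> p = id)"

definition regular_on :: "nat \<Rightarrow> (nat \<Rightarrow> nat) set \<Rightarrow> bool" where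
  "regular_on d F \<longleftrightarrow> transitive_on d F \<and> semiregular_on d F"

definition preserves_orbits :: "nat \<Rightarrow> (nat \<Rightarrow> nat) set \<Rightarrow> (nat \<Rightarrow> nat) set \<Rightarrow> bool" where
  "preserves_orbits d F F' \<longleftrightarrow> (\<forall>p\<in>F'. \<forall>a<d. \<exists>q\<in>F. q a = p a)"

definition lcosets :: "(nat \<Rightarrow> nat) set \<Rightarrow> (nat \<Rightarrow> nat) set \<Rightarrow> (nat \<Rightarrow> nat) set set" where
  "lcosets F' F = {(\<lambda>h. g \<circ> h) ` F | g. g \<in> F'}"

text \<open>alpha : F' \<rightarrow> Sym({..<n}), the action on F'/F transported via beta : {..<n} \<rightarrow> F'/F\<close>
definition alpha :: "(nat \<Rightarrow> (nat \<Rightarrow> nat) set) \<Rightarrow> nat \<Rightarrow> (nat \<Rightarrow> nat) \<Rightarrow> nat \<Rightarrow> nat" where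
  "alpha \<beta> n g i = the_inv_into {..<n} \<beta> ((\<lambda>h. g \<circ> h) ` \<beta> i)"

definition UF :: "nat \<Rightarrow> (nat \<Rightarrow> nat) set \<Rightarrow> (nat list \<Rightarrow> nat list) set" where
  "UF d F = {g. aut d g \<and> (\<forall>v\<in>Verts d. locperm d g v \<in> F)}"

definition GFF :: "nat \<Rightarrow> (nat \<Rightarrow> nat) set \<Rightarrow> (nat \<Rightarrow> nat) set \<Rightarrow> (nat list \<Rightarrow> nat list) set" where
  "GFF d F F' = {g. aut d g \<and> (\<forall>v\<in>Verts d. locperm d g v \<in> F')
                    \<and> finite {v \<in> Verts d. locperm d g v \<notin> F}}"

text \<open>the index-two subgroup preserving the bipartition (type-preserving automorphisms);
  the two classes of the bipartition are the words of even and of odd length\<close>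
definition GFFstar :: "nat \<Rightarrow> (nat \<Rightarrow> nat) set \<Rightarrow> (nat \<Rightarrow> nat) set \<Rightarrow> (nat list \<Rightarrow> nat list) set" where
  "GFFstar d F F' = {g \<in> GFF d F F'. \<forall>v\<in>Verts d. even (length (g v)) \<longleftrightarrow> even (length v)}"

text \<open>Topology on G(F,F'): generated by the left translates h U(F)_S, h \<in> G(F,F'), of the
  pointwise stabilisers U(F)_S of finite vertex sets S (a neighbourhood base of the identity
  of U(F) in the permutation topology). This is the group topology for which the inclusion of
  U(F) is continuous and open.\<close>
definition GFF_top :: "nat \<Rightarrow> (nat \<Rightarrow> nat) set \<Rightarrow> (nat \<Rightarrow> nat) set \<Rightarrow> (nat list \<Rightarrow> nat list) topology" where
  "GFF_top d F F' = subtopology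
     (topology_generated_by
        {(\<lambda>k. h \<circ> k) ` {k \<in> UF d F. \<forall>s\<in>S. k s = s} | h S.
           h \<in> GFF d F F' \<and> finite S \<and> S \<subseteq> Verts d})
     (GFF d F F')"

definition Xverts :: "nat \<Rightarrow> nat \<Rightarrow> ((nat list \<Rightarrow> nat) \<times> nat list set) set" where
  "Xverts n d = {(f, e). (\<forall>v. f v < n) \<and> (\<forall>v. v \<notin> Verts d \<longrightarrow> f v = 0)
                   \<and> finite {v. f v \<noteq> 0} \<and> e \<in> Edges d}"

text \<open>gamma . (f,e) = (f^gamma, gamma e), (f^gamma)_v = alpha(sigma(gamma, gamma^-1 v)) (f (gamma^-1 v))\<close>
definition act :: "nat \<Rightarrow> (nat \<Rightarrow> (nat \<Rightarrow> nat) set) \<Rightarrow> nat \<Rightarrow> (nat list \<Rightarrow> nat list)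
     \<Rightarrow> (nat list \<Rightarrow> nat) \<times> nat list set \<Rightarrow> (nat list \<Rightarrow> nat) \<times> nat list set" where
  "act d \<beta> n \<gamma> x = (\<lambda>v. if v \<in> Verts d
        then alpha \<beta> n (locperm d \<gamma> (inv_into (Verts d) \<gamma> v)) (fst x (inv_into (Verts d) \<gamma> v))
        else 0, \<gamma> ` snd x)"

text \<open>properness of an action of a topological group on a discrete set X:
  preimages of (finite = compact) sets under (g,x) \<mapsto> (gx,x) are compact, equivalently
  all transporters {g. g x = y} are compact\<close>
definition proper_action :: "'g topology \<Rightarrow> ('g \<Rightarrow> 'x \<Rightarrow> 'x) \<Rightarrow> 'x set \<Rightarrow> bool" where
  "proper_action T a X \<longleftrightarrow> (\<forall>x\<in>X. \<forall>y\<in>X. compactin T {g \<in> topspace T. a g x = y})"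

end

theory Submission
  imports Defs
begin

lemma Verts_iff: "w \<in> Verts d \<longleftrightarrow> set w \<subseteq> {..<d} \<and> (\<forall>i. Suc i < length w \<longrightarrow> w ! i \<noteq> w ! Suc i)"
  by (simp add: Verts_def)

lemma Verts_Nil[simp]: "[] \<in> Verts d"
  by (simp add: Verts_def)

lemma Verts_snoc: "w @ [a] \<in> Verts d \<longleftrightarrow> w \<in> Verts d \<and> a < d \<and> (w \<noteq> [] \<longrightarrow> last w \<noteq> a)"
proof
  assume h: "w @ [a] \<in> Verts d"
  have w: "w \<in> Verts d"
    unfolding Verts_def
  proof (intro CollectI conjI allI impI)
    show "set w \<subseteq> {..<d}" using h by (auto simp: Verts_def)
    fix i assume i: "Suc i < length w"
    have "(w @ [a]) ! i \<noteq> (w @ [a]) ! Suc i" using h i unfolding Verts_def by simp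
    then show "w ! i \<noteq> w ! Suc i" using i by (simp add: nth_append)
  qed
  moreover have "a < d" using h by (auto simp: Verts_def)
  moreover have "w \<noteq> [] \<longrightarrow> last w \<noteq> a"
  proof
    assume "w \<noteq> []"
    then have "Suc (length w - 1) < length (w@[a])" by simp
    then have "(w@[a]) ! (length w - 1) \<noteq> (w@[a]) ! Suc (length w - 1)"
      using h unfolding Verts_def by blast
    moreover have "(w@[a]) ! (length w - 1) = last w" using \<open>w \<noteq> []\<close>
      by (simp add: nth_append last_conv_nth)
    moreover have "(w@[a]) ! Suc (length w - 1) = a" using \<open>w \<noteq> []\<close> by simp
    ultimately show "last w \<noteq> a" by simp
  qed
  ultimately show "w \<in> Verts d \<and> a < d \<and> (w \<noteq> [] \<longrightarrow> last w \<noteq> a)" by blast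
next
  assume h: "w \<in> Verts d \<and> a < d \<and> (w \<noteq> [] \<longrightarrow> last w \<noteq> a)"
  show "w @ [a] \<in> Verts d"
    unfolding Verts_def
  proof (intro CollectI conjI allI impI)
    show "set (w @ [a]) \<subseteq> {..<d}" using h by (auto simp: Verts_def)
    fix i assume i: "Suc i < length (w @ [a])"
    show "(w @ [a]) ! i \<noteq> (w @ [a]) ! Suc i"
    proof (cases "Suc i < length w")
      case True
      then show ?thesis using h by (auto simp: Verts_def nth_append)
    next
      case False
      then have si: "Suc i = length w" using i by simp
      then have "w \<noteq> []" by auto
      have "i = length w - 1" using si by simp
      then have "(w @ [a]) ! i = last w" using si \<open>w \<noteq> []\<close>
        by (simp add: nth_append last_conv_nth)
      moreover have "(w @ [a]) ! Suc i = a" using si by simp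
      ultimately show ?thesis using h \<open>w \<noteq> []\<close> by simp
    qed
  qed
qed

lemma Verts_butlast: "w \<in> Verts d \<Longrightarrow> butlast w \<in> Verts d"
  by (cases w rule: rev_cases) (auto simp: Verts_snoc)

lemma Verts_induct[consumes 1, case_names Nil snoc]:
  assumes "w \<in> Verts d" "P []"
    "\<And>w a. w @ [a] \<in> Verts d \<Longrightarrow> P w \<Longrightarrow> P (w @ [a])"
  shows "P w"
  using assms(1)
proof (induction w rule: rev_induct)
  case Nil then show ?case using assms(2) by simp
next
  case (snoc a w)
  then show ?case using assms(3) Verts_snoc by blast
qed

lemma nb_Verts: "v \<in> Verts d \<Longrightarrow> a < d \<Longrightarrow> nb v a \<in> Verts d"
  by (auto simp: nb_def Verts_butlast Verts_snoc)

lemma nb_nb: assumes "v \<in> Verts d" shows "nb (nb v a) a = v"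
proof (cases "v \<noteq> [] \<and> last v = a")
  case True
  then obtain u where u: "v = u @ [a]" by (metis append_butlast_last_id)
  have "u = [] \<or> last u \<noteq> a"
    using assms u Verts_snoc by blast
  then show ?thesis using u by (auto simp: nb_def)
next
  case False
  then show ?thesis by (auto simp: nb_def)
qed

lemma length_nb: "length (nb v a) = length v + 1 \<or> length (nb v a) + 1 = length v"
  by (auto simp: nb_def)

lemma even_length_nb: "even (length (nb v a)) \<longleftrightarrow> odd (length v)"
  by (auto simp: nb_def)

lemma length_nb_cases: "length (nb v a) = (if v \<noteq> [] \<and> last v = a then length v - 1 else Suc (length v))"
  by (simp add: nb_def)

lemma nb_inj: assumes "v \<in> Verts d" and e: "nb v a = nb v b" shows "a = b"
proof (cases "v \<noteq> [] \<and> last v = a")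
  case A: True
  show ?thesis
  proof (cases "v \<noteq> [] \<and> last v = b")
    case True
    have a: "last v = a" using A by (rule conjunct2)
    have b: "last v = b" using True by (rule conjunct2)
    show ?thesis using a b by (rule trans[OF sym])
  next
    case False
    have "nb v a = butlast v" unfolding nb_def using A by (rule if_P)
    moreover have "nb v b = v @ [b]" unfolding nb_def using False by (rule if_not_P)
    ultimately have "length (nb v a) \<noteq> length (nb v b)" by simp
    then show ?thesis using e by (simp only:)
  qed
next
  case A: False
  show ?thesis
  proof (cases "v \<noteq> [] \<and> last v = b")
    case True
    have "nb v b = butlast v" unfolding nb_def using True by (rule if_P)
    moreover have "nb v a = v @ [a]" unfolding nb_def using A by (rule if_not_P)
    ultimately have "length (nb v a) \<noteq> length (nb v b)" by simp
    then show ?thesis using e by (simp only:)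
  next
    case False
    have 1: "nb v a = v @ [a]" unfolding nb_def using A by (rule if_not_P)
    have 2: "nb v b = v @ [b]" unfolding nb_def using False by (rule if_not_P)
    have "v @ [a] = v @ [b]" using e unfolding 1 2 .
    then show ?thesis by simp
  qed
qed

lemma snoc_nb: "w @ [a] \<in> Verts d \<Longrightarrow> w @ [a] = nb w a"
  by (auto simp: nb_def Verts_snoc)

lemma snoc_nb': "w @ [a] \<in> Verts d \<Longrightarrow> w = nb (w @ [a]) a"
  by (auto simp: nb_def)

lemma nb_ne: "nb v a \<noteq> v"
proof
  assume "nb v a = v"
  then have "length (nb v a) = length v" by simp
  then show False by (cases v) (auto simp: length_nb_cases split: if_splits)
qed

lemma ecol_pair: "ecol {w, w @ [a]} = a"
proof -
  have "\<exists>u. {w, w @ [a]} = {u, u @ [a]}" by blast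
  moreover have "\<And>b. (\<exists>u. {w, w @ [a]} = {u, u @ [b]}) \<Longrightarrow> b = a"
  proof -
    fix b assume "\<exists>u. {w, w @ [a]} = {u, u @ [b]}"
    then obtain u where u: "{w, w @ [a]} = {u, u @ [b]}" by blast
    then have "(w = u \<and> w @ [a] = u @ [b]) \<or> (w = u @ [b] \<and> w @ [a] = u)"
      by (auto simp: doubleton_eq_iff)
    then show "b = a" by auto
  qed
  ultimately show ?thesis unfolding ecol_def by (intro the_equality) blast+
qed

lemma ecol_nb: "v \<in> Verts d \<Longrightarrow> ecol {v, nb v a} = a"
proof (cases "v \<noteq> [] \<and> last v = a")
  case True
  then obtain u where u: "v = u @ [a]" by (metis append_butlast_last_id)
  then show ?thesis using True by (simp add: nb_def insert_commute ecol_pair)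
next
  case False
  then show ?thesis by (auto simp: nb_def ecol_pair)
qed

lemma Edges_iff: "e \<in> Edges d \<longleftrightarrow> (\<exists>v\<in>Verts d. \<exists>a<d. e = {v, nb v a})"
proof
  assume "e \<in> Edges d"
  then obtain w a where "e = {w, w @ [a]}" "w @ [a] \<in> Verts d" by (auto simp: Edges_def)
  then have "w \<in> Verts d" "a < d" "e = {w, nb w a}" using Verts_snoc[of w a d] snoc_nb[of w a d] by simp_all
  then show "\<exists>v\<in>Verts d. \<exists>a<d. e = {v, nb v a}" by blast
next
  assume "\<exists>v\<in>Verts d. \<exists>a<d. e = {v, nb v a}"
  then obtain v a where v: "v \<in> Verts d" "a < d" "e = {v, nb v a}" by blast
  show "e \<in> Edges d"
  proof (cases "v \<noteq> [] \<and> last v = a")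
    case True
    then obtain u where u: "v = u @ [a]" by (metis append_butlast_last_id)
    then have "e = {u, u @ [a]}" using v True by (auto simp: nb_def)
    then show ?thesis using v u unfolding Edges_def by blast
  next
    case False
    then have "v @ [a] \<in> Verts d" using v Verts_snoc by blast
    moreover have "e = {v, v @ [a]}" using v False by (auto simp: nb_def)
    ultimately show ?thesis unfolding Edges_def by blast
  qed
qed

lemma Edges_sub: "e \<in> Edges d \<Longrightarrow> e \<subseteq> Verts d"
  by (auto simp: Edges_iff nb_Verts)

lemma edge_at: assumes "e \<in> Edges d" "u \<in> e" shows "ecol e < d" "e = {u, nb u (ecol e)}"
proof -
  obtain v a where v: "v \<in> Verts d" "a < d" "e = {v, nb v a}" using assms Edges_iff by blast
  have ec: "ecol e = a" using v ecol_nb by simp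
  then show "ecol e < d" using v by simp
  show "e = {u, nb u (ecol e)}"
    using assms(2) v ec nb_nb by auto
qed

lemma edge_pair_iff: "v \<in> Verts d \<Longrightarrow> w \<in> Verts d \<Longrightarrow> {v, w} \<in> Edges d \<longleftrightarrow> (\<exists>a<d. w = nb v a)"
proof
  assume "v \<in> Verts d" "w \<in> Verts d" "{v, w} \<in> Edges d"
  then have "{v,w} = {v, nb v (ecol {v,w})}" "ecol {v,w} < d" using edge_at by blast+
  then show "\<exists>a<d. w = nb v a"
    using nb_ne[of v "ecol {v,w}"] by (auto simp: doubleton_eq_iff)
next
  assume "v \<in> Verts d" "w \<in> Verts d" "\<exists>a<d. w = nb v a"
  then show "{v, w} \<in> Edges d" by (auto simp: Edges_iff)
qed

lemma finite_Verts_le: "finite {v \<in> Verts d. length v \<le> N}"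
proof -
  have "{v \<in> Verts d. length v \<le> N} \<subseteq> {xs. set xs \<subseteq> {..<d} \<and> length xs \<le> N}"
    by (auto simp: Verts_def)
  then show ?thesis using finite_lists_length_le[of "{..<d}" N] finite_subset by blast
qed

lemma aut_Verts: "aut d g \<Longrightarrow> v \<in> Verts d \<Longrightarrow> g v \<in> Verts d"
  by (auto simp: aut_def bij_betw_def)

lemma aut_out: "aut d g \<Longrightarrow> x \<notin> Verts d \<Longrightarrow> g x = x"
  by (auto simp: aut_def)

lemma aut_inj_on: "aut d g \<Longrightarrow> inj_on g (Verts d)"
  by (auto simp: aut_def bij_betw_def)

lemma aut_inj: assumes "aut d g" shows "inj g"
proof (rule injI)
  fix x y assume e: "g x = g y"
  show "x = y"
  proof (cases "x \<in> Verts d"; cases "y \<in> Verts d")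
    assume "x \<in> Verts d" "y \<in> Verts d"
    then show ?thesis using e aut_inj_on[OF assms] by (auto dest: inj_onD)
  next
    assume "x \<in> Verts d" "y \<notin> Verts d"
    then show ?thesis using e aut_Verts[OF assms] aut_out[OF assms] by metis
  next
    assume "x \<notin> Verts d" "y \<in> Verts d"
    then show ?thesis using e aut_Verts[OF assms] aut_out[OF assms] by metis
  next
    assume "x \<notin> Verts d" "y \<notin> Verts d"
    then show ?thesis using e aut_out[OF assms] by metis
  qed
qed

lemma aut_surj: assumes "aut d g" "u \<in> Verts d" shows "\<exists>v\<in>Verts d. g v = u"
proof -
  have "g ` Verts d = Verts d" using assms(1) by (simp add: aut_def bij_betw_def)
  then have "u \<in> g ` Verts d" using assms(2) by simp
  then show ?thesis by blast
qed

lemma aut_edge: assumes "aut d g" "v \<in> Verts d" "w \<in> Verts d"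
  shows "{g v, g w} \<in> Edges d \<longleftrightarrow> {v, w} \<in> Edges d"
  using assms by (auto simp: aut_def)

lemma aut_nb: assumes g: "aut d g" and v: "v \<in> Verts d" and a: "a < d"
  shows "locperm d g v a < d" "g (nb v a) = nb (g v) (locperm d g v a)"
proof -
  have nv: "nb v a \<in> Verts d" using nb_Verts v a by blast
  have "{v, nb v a} \<in> Edges d" using v a by (auto simp: Edges_iff)
  then have E: "{g v, g (nb v a)} \<in> Edges d" using aut_edge[OF g v nv] by simp
  have lp: "locperm d g v a = ecol {g v, g (nb v a)}" using a by (simp add: locperm_def)
  show "locperm d g v a < d" using edge_at(1)[OF E, of "g v"] lp by simp
  have "{g v, g (nb v a)} = {g v, nb (g v) (locperm d g v a)}"
    using edge_at(2)[OF E, of "g v"] lp by simp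
  moreover have "g (nb v a) \<noteq> g v"
    using nb_ne[of v a] aut_inj[OF g] by (auto dest: injD)
  ultimately show "g (nb v a) = nb (g v) (locperm d g v a)"
    by (auto simp: doubleton_eq_iff)
qed

lemma locperm_out: "a \<ge> d \<Longrightarrow> locperm d g v a = a"
  by (simp add: locperm_def)

lemma locperm_permutes: assumes g: "aut d g" and v: "v \<in> Verts d"
  shows "locperm d g v permutes {..<d}"
proof (rule bij_imp_permutes)
  have inj: "inj_on (locperm d g v) {..<d}"
  proof (rule inj_onI)
    fix a b assume a: "a \<in> {..<d}" and b: "b \<in> {..<d}" and e: "locperm d g v a = locperm d g v b"
    then have "g (nb v a) = g (nb v b)" using aut_nb[OF g v] by simp
    then have "nb v a = nb v b" using aut_inj[OF g] by (auto dest: injD)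
    then show "a = b" using nb_inj[OF v] by blast
  qed
  have sub: "locperm d g v ` {..<d} \<subseteq> {..<d}" using aut_nb(1)[OF g v] by auto
  have "locperm d g v ` {..<d} = {..<d}" using endo_inj_surj[OF _ sub inj] by simp
  then show "bij_betw (locperm d g v) {..<d} {..<d}" using inj by (simp add: bij_betw_def)
  show "\<And>x. x \<notin> {..<d} \<Longrightarrow> locperm d g v x = x" by (simp add: locperm_def)
qed

lemma locperm_local: assumes "g v = h v" "\<And>a. a < d \<Longrightarrow> g (nb v a) = h (nb v a)"
  shows "locperm d g v = locperm d h v"
  using assms by (auto simp: locperm_def fun_eq_iff)

lemma aut_id: "aut d id"
  by (simp add: aut_def)

lemma locperm_id: "v \<in> Verts d \<Longrightarrow> locperm d id v = id"
  by (auto simp: locperm_def fun_eq_iff ecol_nb)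

lemma aut_comp: assumes g: "aut d g" and h: "aut d h" shows "aut d (g \<circ> h)"
  unfolding aut_def
proof (intro conjI ballI allI impI)
  show "bij_betw (g \<circ> h) (Verts d) (Verts d)" using g h bij_betw_trans by (auto simp: aut_def)
  fix x assume "x \<notin> Verts d" then show "(g \<circ> h) x = x" using g h by (auto simp: aut_def)
next
  fix v w assume "v \<in> Verts d" "w \<in> Verts d"
  then show "({(g \<circ> h) v, (g \<circ> h) w} \<in> Edges d) = ({v, w} \<in> Edges d)"
    using aut_edge[OF g] aut_edge[OF h] aut_Verts[OF h] by simp
qed

lemma locperm_comp: assumes g: "aut d g" and h: "aut d h" and v: "v \<in> Verts d"
  shows "locperm d (g \<circ> h) v = locperm d g (h v) \<circ> locperm d h v"
proof
  fix a show "locperm d (g \<circ> h) v a = (locperm d g (h v) \<circ> locperm d h v) a"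
  proof (cases "a < d")
    case True
    have hv: "h v \<in> Verts d" using aut_Verts[OF h v] .
    have b: "locperm d h v a < d" using aut_nb(1)[OF h v True] .
    have "locperm d (g \<circ> h) v a = locperm d (g \<circ> h) v a" ..
    have "(g \<circ> h) (nb v a) = nb ((g \<circ> h) v) (locperm d g (h v) (locperm d h v a))"
      using aut_nb(2)[OF h v True] aut_nb(2)[OF g hv b] by simp
    moreover have "(g \<circ> h) (nb v a) = nb ((g \<circ> h) v) (locperm d (g \<circ> h) v a)"
      using aut_nb(2)[OF aut_comp[OF g h] v True] .
    moreover have "(g \<circ> h) v \<in> Verts d" using aut_Verts[OF g hv] by simp
    ultimately show ?thesis using nb_inj by (metis comp_apply)
  next
    case False then show ?thesis by (simp add: locperm_def)
  qed
qed

definition ginv :: "nat \<Rightarrow> (nat list \<Rightarrow> nat list) \<Rightarrow> nat list \<Rightarrow> nat list" where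
  "ginv d g x = (if x \<in> Verts d then inv_into (Verts d) g x else x)"

lemma ginv_props: assumes g: "aut d g"
  shows "g \<circ> ginv d g = id" "ginv d g \<circ> g = id" "aut d (ginv d g)"
proof -
  have bij: "bij_betw g (Verts d) (Verts d)" using g by (simp add: aut_def)
  show 1: "g \<circ> ginv d g = id"
  proof
    fix x show "(g \<circ> ginv d g) x = id x"
      using bij aut_out[OF g] by (auto simp: ginv_def bij_betw_inv_into_right)
  qed
  show 2: "ginv d g \<circ> g = id"
  proof
    fix x show "(ginv d g \<circ> g) x = id x"
    proof (cases "x \<in> Verts d")
      case True
      then show ?thesis using bij aut_Verts[OF g] by (simp add: ginv_def bij_betw_inv_into_left)
    next
      case False
      then show ?thesis using aut_out[OF g] by (simp add: ginv_def)
    qed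
  qed
  have iV: "\<And>x. x \<in> Verts d \<Longrightarrow> ginv d g x \<in> Verts d"
    using bij by (auto simp: ginv_def bij_betw_def inv_into_into)
  show "aut d (ginv d g)"
    unfolding aut_def
  proof (intro conjI ballI allI impI)
    show "bij_betw (ginv d g) (Verts d) (Verts d)"
      using bij_betw_inv_into[OF bij] by (simp add: ginv_def cong: bij_betw_cong)
    fix x assume "x \<notin> Verts d" then show "ginv d g x = x" by (simp add: ginv_def)
  next
    fix v w assume v: "v \<in> Verts d" and w: "w \<in> Verts d"
    have "({g (ginv d g v), g (ginv d g w)} \<in> Edges d) = ({ginv d g v, ginv d g w} \<in> Edges d)"
      using aut_edge[OF g iV[OF v] iV[OF w]] .
    moreover have "g (ginv d g v) = v" "g (ginv d g w) = w" using 1 by (metis comp_apply id_apply)+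
    ultimately show "({ginv d g v, ginv d g w} \<in> Edges d) = ({v, w} \<in> Edges d)" by simp
  qed
qed

lemma ginv_apply: assumes "aut d g" shows "g (ginv d g x) = x" "ginv d g (g x) = x"
  using ginv_props[OF assms] by (metis comp_apply id_apply)+

lemma locperm_ginv: assumes g: "aut d g" and u: "u \<in> Verts d"
  shows "locperm d (ginv d g) u = inv (locperm d g (ginv d g u))"
proof -
  have gi: "aut d (ginv d g)" using ginv_props(3)[OF g] .
  have "locperm d (g \<circ> ginv d g) u = locperm d g (ginv d g u) \<circ> locperm d (ginv d g) u"
    using locperm_comp[OF g gi u] .
  then have e: "locperm d g (ginv d g u) \<circ> locperm d (ginv d g) u = id"
    using locperm_id[OF u] ginv_props(1)[OF g] by simp
  have p: "locperm d g (ginv d g u) permutes {..<d}"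
    using locperm_permutes[OF g aut_Verts[OF gi u]] .
  show ?thesis
  proof
    fix a
    have "locperm d g (ginv d g u) (locperm d (ginv d g) u a) = a" using e by (metis comp_apply id_apply)
    then show "locperm d (ginv d g) u a = inv (locperm d g (ginv d g u)) a"
      using permutes_inverses(2)[OF p] by metis
  qed
qed

lemma aut_intro:
  assumes bij: "bij_betw g (Verts d) (Verts d)" and out: "\<And>x. x \<notin> Verts d \<Longrightarrow> g x = x"
    and nbp: "\<And>v a. v \<in> Verts d \<Longrightarrow> a < d \<Longrightarrow> g (nb v a) = nb (g v) (p v a)"
    and pim: "\<And>v. v \<in> Verts d \<Longrightarrow> p v ` {..<d} = {..<d}"
  shows "aut d g"
  unfolding aut_def
proof (intro conjI ballI allI impI bij out)
  fix v w assume v: "v \<in> Verts d" and w: "w \<in> Verts d"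
  have gv: "g v \<in> Verts d" "g w \<in> Verts d" using bij v w by (auto simp: bij_betw_def)
  show "({g v, g w} \<in> Edges d) = ({v, w} \<in> Edges d)"
  proof
    assume "{g v, g w} \<in> Edges d"
    then obtain b where b: "b < d" "g w = nb (g v) b" using edge_pair_iff gv by blast
    then obtain a where a: "a < d" "p v a = b" using pim[OF v] by (metis imageE lessThan_iff)
    then have "g (nb v a) = g w" using nbp[OF v a(1)] b by simp
    then have "nb v a = w" using bij nb_Verts[OF v a(1)] w by (auto simp: bij_betw_def dest: inj_onD)
    then show "{v, w} \<in> Edges d" using edge_pair_iff[OF v w] a by blast
  next
    assume "{v, w} \<in> Edges d"
    then obtain a where a: "a < d" "w = nb v a" using edge_pair_iff v w by blast
    then have "g w = nb (g v) (p v a)" using nbp[OF v] by simp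
    moreover have "p v a < d" using pim[OF v] a by auto
    ultimately show "{g v, g w} \<in> Edges d" using edge_pair_iff gv by blast
  qed
qed

lemma aut_edges: assumes g: "aut d g" and e: "e \<in> Edges d" shows "g ` e \<in> Edges d"
proof -
  obtain v a where v: "v \<in> Verts d" "a < d" "e = {v, nb v a}" using e Edges_iff by blast
  have "g ` e = {g v, nb (g v) (locperm d g v a)}" using aut_nb[OF g v(1,2)] v by simp
  then show ?thesis using aut_nb(1)[OF g v(1,2)] aut_Verts[OF g v(1)] Edges_iff by blast
qed

lemma aut_length_root: assumes g: "aut d g" and w: "w \<in> Verts d"
  shows "length (g w) \<le> length (g []) + length w \<and> length (g []) \<le> length (g w) + length w"
  using w
proof (induction rule: Verts_induct)
  case Nil then show ?case by simp
next
  case (snoc w a)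
  have wV: "w \<in> Verts d" "a < d" using snoc(1) Verts_snoc by blast+
  have "g (w @ [a]) = nb (g w) (locperm d g w a)"
    using snoc_nb[OF snoc(1)] aut_nb(2)[OF g wV] by simp
  then have "length (g (w @ [a])) \<le> length (g w) + 1 \<and> length (g w) \<le> length (g (w @ [a])) + 1"
    using length_nb[of "g w" "locperm d g w a"] by auto
  then show ?case using snoc(2) by simp
qed

lemma aut_length: assumes g: "aut d g" and v: "v \<in> Verts d" and w: "w \<in> Verts d"
  shows "length (g w) \<le> length (g v) + length v + length w"
  using aut_length_root[OF g v] aut_length_root[OF g w] by linarith

lemma even_length_aut_nb: assumes g: "aut d g" and v: "v \<in> Verts d" and a: "a < d"
  shows "even (length (g (nb v a))) \<longleftrightarrow> odd (length (g v))"
  using aut_nb(2)[OF g v a] even_length_nb by simp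

lemma last_Verts: assumes "w \<in> Verts d" "w \<noteq> []" shows "last w < d"
proof -
  have "last w \<in> set w" using last_in_set assms(2) by blast
  moreover have "set w \<subseteq> {..<d}" using assms(1) by (simp add: Verts_def)
  ultimately show ?thesis by auto
qed

definition mult :: "nat list \<Rightarrow> nat list \<Rightarrow> nat list" where
  "mult r v = foldl nb r v"

lemma mult_snoc: "mult r (v @ [a]) = nb (mult r v) a"
  by (simp add: mult_def)

lemma mult_Nil2[simp]: "mult r [] = r"
  by (simp add: mult_def)

lemma mult_Verts: assumes r: "r \<in> Verts d" and v: "v \<in> Verts d" shows "mult r v \<in> Verts d"
  using v
proof (induction rule: Verts_induct)
  case Nil then show ?case using r by simp
next
  case (snoc w a)
  then show ?case using nb_Verts Verts_snoc mult_snoc by metis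
qed

lemma nb_snoc_last: "nb (xs @ [a]) a = xs"
  by (simp add: nb_def)

lemma mult_nb: assumes x: "x \<in> Verts d" and u: "u \<in> Verts d" and a: "a < d"
  shows "mult x (nb u a) = nb (mult x u) a"
proof (cases "u \<noteq> [] \<and> last u = a")
  case True
  define u0 where "u0 = butlast u"
  have uu: "u = u0 @ [a]" using True unfolding u0_def by (metis append_butlast_last_id)
  have u0: "u0 \<in> Verts d" using Verts_butlast[OF u] unfolding u0_def .
  have "nb u a = u0" unfolding uu by (rule nb_snoc_last)
  moreover have "mult x u = nb (mult x u0) a" unfolding uu by (rule mult_snoc)
  moreover have "nb (nb (mult x u0) a) a = mult x u0" using nb_nb mult_Verts[OF x u0] by blast
  ultimately show ?thesis by simp
next
  case False
  then have "nb u a = u @ [a]" unfolding nb_def by (rule if_not_P)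
  then show ?thesis by (simp add: mult_snoc)
qed

lemma mult_assoc: assumes x: "x \<in> Verts d" and y: "y \<in> Verts d" and v: "v \<in> Verts d"
  shows "mult x (mult y v) = mult (mult x y) v"
  using v
proof (induction rule: Verts_induct)
  case Nil then show ?case by simp
next
  case (snoc w a)
  have w: "w \<in> Verts d" "a < d" using snoc(1) Verts_snoc by blast+
  have "mult x (mult y (w @ [a])) = mult x (nb (mult y w) a)" by (simp add: mult_snoc)
  also have "\<dots> = nb (mult x (mult y w)) a" using mult_nb[OF x mult_Verts[OF y w(1)] w(2)] .
  also have "\<dots> = nb (mult (mult x y) w) a" using snoc(2) by simp
  also have "\<dots> = mult (mult x y) (w @ [a])" by (simp add: mult_snoc)
  finally show ?case .
qed

lemma mult_Nil: assumes v: "v \<in> Verts d" shows "mult [] v = v"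
  using v
proof (induction rule: Verts_induct)
  case Nil then show ?case by simp
next
  case (snoc w a)
  have "mult [] (w @ [a]) = nb w a" using snoc(2) by (simp add: mult_snoc)
  also have "\<dots> = w @ [a]" using snoc_nb[OF snoc(1)] by simp
  finally show ?case .
qed

lemma mult_rev: "mult (rev r) r = []"
proof (induction r)
  case Nil then show ?case by simp
next
  case (Cons a r)
  have "mult (rev (a # r)) (a # r) = mult (nb (rev r @ [a]) a) r" by (simp add: mult_def)
  also have "\<dots> = mult (rev r) r" by (simp only: nb_snoc_last)
  finally show ?case using Cons by simp
qed

lemma rev_Verts: assumes "r \<in> Verts d" shows "rev r \<in> Verts d"
  unfolding Verts_def
proof (intro CollectI conjI allI impI)
  show "set (rev r) \<subseteq> {..<d}" using assms by (simp add: Verts_def)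
  fix i assume i: "Suc i < length (rev r)"
  define j where "j = length r - Suc (Suc i)"
  have j: "Suc j < length r" "Suc j = length r - Suc i" using i unfolding j_def by auto
  have "r ! j \<noteq> r ! Suc j" using assms j(1) by (simp add: Verts_def)
  moreover have "rev r ! i = r ! Suc j" using i j by (simp add: rev_nth)
  moreover have "rev r ! Suc i = r ! j" using i j unfolding j_def by (simp add: rev_nth)
  ultimately show "rev r ! i \<noteq> rev r ! Suc i" by simp
qed

definition Lmap :: "nat \<Rightarrow> nat list \<Rightarrow> nat list \<Rightarrow> nat list" where
  "Lmap d r x = (if x \<in> Verts d then mult r x else x)"

lemma Lmap_aut: assumes r: "r \<in> Verts d" shows "aut d (Lmap d r)"
proof (rule aut_intro[where p = "\<lambda>v a. a"])
  have rr: "rev r \<in> Verts d" using rev_Verts[OF r] .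
  have inv1: "mult (rev r) (mult r v) = v" if "v \<in> Verts d" for v
    using mult_assoc[OF rr r that] mult_rev mult_Nil[OF that] by simp
  have inv2: "mult r (mult (rev r) v) = v" if "v \<in> Verts d" for v
    using mult_assoc[OF r rr that] mult_rev[of "rev r"] mult_Nil[OF that] by simp
  show "bij_betw (Lmap d r) (Verts d) (Verts d)"
  proof (rule bij_betw_byWitness[where f' = "mult (rev r)"])
    show "\<forall>a\<in>Verts d. mult (rev r) (Lmap d r a) = a" using inv1 by (simp add: Lmap_def)
    show "\<forall>a'\<in>Verts d. Lmap d r (mult (rev r) a') = a'"
      using inv2 mult_Verts[OF rr] by (simp add: Lmap_def)
    show "Lmap d r ` Verts d \<subseteq> Verts d" using mult_Verts[OF r] by (auto simp: Lmap_def)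
    show "mult (rev r) ` Verts d \<subseteq> Verts d" using mult_Verts[OF rr] by auto
  qed
  show "\<And>x. x \<notin> Verts d \<Longrightarrow> Lmap d r x = x" by (simp add: Lmap_def)
  show "\<And>v a. v \<in> Verts d \<Longrightarrow> a < d \<Longrightarrow> Lmap d r (nb v a) = nb (Lmap d r v) a"
    using mult_nb[OF r] nb_Verts by (simp add: Lmap_def)
  show "\<And>v. v \<in> Verts d \<Longrightarrow> (\<lambda>a. a) ` {..<d} = {..<d}" by simp
qed

lemma Lmap_locperm: assumes r: "r \<in> Verts d" and v: "v \<in> Verts d"
  shows "locperm d (Lmap d r) v = id"
proof
  fix a show "locperm d (Lmap d r) v a = id a"
  proof (cases "a < d")
    case True
    have "Lmap d r (nb v a) = nb (Lmap d r v) (locperm d (Lmap d r) v a)"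
      using aut_nb(2)[OF Lmap_aut[OF r] v True] .
    moreover have "Lmap d r (nb v a) = nb (Lmap d r v) a"
      using mult_nb[OF r v True] nb_Verts[OF v True] v by (simp add: Lmap_def)
    ultimately show ?thesis using nb_inj aut_Verts[OF Lmap_aut[OF r] v] by (metis id_apply)
  next
    case False then show ?thesis by (simp add: locperm_def)
  qed
qed

lemma even_length_mult: "even (length (mult r v)) \<longleftrightarrow> even (length r + length v)"
proof (induction v rule: rev_induct)
  case Nil then show ?case by simp
next
  case (snoc a v)
  then show ?case using even_length_nb[of "mult r v" a] by (simp add: mult_snoc)
qed

definition Rmap :: "nat \<Rightarrow> (nat list \<Rightarrow> nat list) \<Rightarrow> nat list \<Rightarrow> nat list" where
  "Rmap d R x = (if x \<in> Verts d then R x else x)"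

locale rooted =
  fixes d :: nat and R :: "nat list \<Rightarrow> nat list" and P :: "nat list \<Rightarrow> nat \<Rightarrow> nat"
  assumes R0: "R [] = []"
    and Rs: "\<And>w a. w @ [a] \<in> Verts d \<Longrightarrow> R (w @ [a]) = R w @ [P w a]"
    and Pim: "\<And>w. w \<in> Verts d \<Longrightarrow> P w ` {..<d} = {..<d}"
    and Pc: "\<And>w a. w @ [a] \<in> Verts d \<Longrightarrow> P (w @ [a]) a = P w a"
begin

lemma Pinj: "w \<in> Verts d \<Longrightarrow> inj_on (P w) {..<d}"
  using finite_surj_inj[of "{..<d}" "P w"] Pim by simp

lemma Pd: "w \<in> Verts d \<Longrightarrow> a < d \<Longrightarrow> P w a < d"
  using Pim by blast

lemma R_basic: "w \<in> Verts d \<Longrightarrow> R w \<in> Verts d \<and> length (R w) = length w \<and> (w \<noteq> [] \<longrightarrow> last (R w) = P w (last w))"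
proof (induction rule: Verts_induct)
  case Nil then show ?case using R0 by simp
next
  case (snoc w a)
  have w: "w \<in> Verts d" "a < d" "w \<noteq> [] \<longrightarrow> last w \<noteq> a" using snoc(1) Verts_snoc by blast+
  have e: "R (w @ [a]) = R w @ [P w a]" using Rs[OF snoc(1)] .
  have "R w \<noteq> [] \<longrightarrow> last (R w) \<noteq> P w a"
  proof
    assume "R w \<noteq> []"
    then have "w \<noteq> []" using snoc(2) by auto
    then have "last (R w) = P w (last w)" "last w \<noteq> a" "last w < d"
      using snoc(2) w last_Verts[OF w(1)] by auto
    then show "last (R w) \<noteq> P w a" using Pinj[OF w(1)] w(2) by (auto dest: inj_onD)
  qed
  then have "R w @ [P w a] \<in> Verts d" using snoc(2) Pd[OF w(1,2)] Verts_snoc by blast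
  then show ?case using e snoc(2) Pc[OF snoc(1)] by simp
qed

lemma R_nb: assumes w: "w \<in> Verts d" and a: "a < d"
  shows "Rmap d R (nb w a) = nb (Rmap d R w) (P w a)"
proof (cases "w \<noteq> [] \<and> last w = a")
  case True
  define w0 where "w0 = butlast w"
  have ww: "w = w0 @ [a]" using True unfolding w0_def by (metis append_butlast_last_id)
  have w0: "w0 \<in> Verts d" using Verts_butlast[OF w] unfolding w0_def .
  have "nb w a = w0" unfolding ww by (rule nb_snoc_last)
  moreover have "R w = R w0 @ [P w0 a]" using Rs w unfolding ww by blast
  moreover have "P w a = P w0 a" using Pc w unfolding ww by blast
  ultimately show ?thesis using w w0 by (simp add: Rmap_def nb_snoc_last)
next
  case False
  then have n: "nb w a = w @ [a]" unfolding nb_def by (rule if_not_P)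
  have wa: "w @ [a] \<in> Verts d" using False w a Verts_snoc by blast
  have "R w \<noteq> [] \<longrightarrow> last (R w) \<noteq> P w a"
  proof
    assume "R w \<noteq> []"
    then have "w \<noteq> []" using R_basic[OF w] by auto
    then have "last (R w) = P w (last w)" "last w \<noteq> a" "last w < d"
      using R_basic[OF w] False last_Verts[OF w] by auto
    then show "last (R w) \<noteq> P w a" using Pinj[OF w] a by (auto dest: inj_onD)
  qed
  then have "nb (R w) (P w a) = R w @ [P w a]" unfolding nb_def by auto
  then show ?thesis using n wa w Rs[OF wa] by (simp add: Rmap_def)
qed

lemma R_inj: "v \<in> Verts d \<Longrightarrow> w \<in> Verts d \<Longrightarrow> R v = R w \<Longrightarrow> v = w"
proof (induction v arbitrary: w rule: Verts_induct)
  case Nil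
  then have "length w = 0" using R_basic R0 by (metis list.size(3))
  then show ?case by simp
next
  case (snoc v a)
  have v: "v \<in> Verts d" "a < d" using snoc(1) Verts_snoc by blast+
  have "length w = Suc (length v)" using R_basic[OF snoc(1)] R_basic[OF snoc(3)] snoc(4) by simp
  then obtain w0 b where wb: "w = w0 @ [b]" by (metis length_Suc_conv_rev)
  have w0: "w0 \<in> Verts d" "b < d" using snoc(3) Verts_snoc unfolding wb by blast+
  have "R v @ [P v a] = R w0 @ [P w0 b]" using snoc(4) Rs[OF snoc(1)] Rs snoc(3) unfolding wb by metis
  then have 1: "R v = R w0" and 2: "P v a = P w0 b" by simp_all
  have "v = w0" using snoc(2)[OF w0(1) 1] .
  then have "a = b" using 2 Pinj[OF v(1)] v(2) w0(2) by (auto dest: inj_onD)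
  then show ?case using \<open>v = w0\<close> wb by simp
qed

lemma R_surj: "u \<in> Verts d \<Longrightarrow> \<exists>w\<in>Verts d. R w = u"
proof (induction rule: Verts_induct)
  case Nil then show ?case using R0 by auto
next
  case (snoc u c)
  obtain w0 where w0: "w0 \<in> Verts d" "R w0 = u" using snoc(2) by blast
  have c: "c < d" "u \<noteq> [] \<longrightarrow> last u \<noteq> c" using snoc(1) Verts_snoc by blast+
  obtain a where a: "a < d" "P w0 a = c" using Pim[OF w0(1)] c(1) by (metis imageE lessThan_iff)
  have "w0 \<noteq> [] \<longrightarrow> last w0 \<noteq> a"
  proof
    assume "w0 \<noteq> []"
    then have "u \<noteq> []" "last u = P w0 (last w0)" using R_basic[OF w0(1)] w0(2) by auto
    then show "last w0 \<noteq> a" using c a by auto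
  qed
  then have wa: "w0 @ [a] \<in> Verts d" using w0(1) a(1) Verts_snoc by blast
  then have "R (w0 @ [a]) = u @ [c]" using Rs w0 a by simp
  then show ?case using wa by blast
qed

lemma Rmap_aut: "aut d (Rmap d R)"
proof (rule aut_intro[where p = P])
  show "bij_betw (Rmap d R) (Verts d) (Verts d)"
    unfolding bij_betw_def
  proof
    show "inj_on (Rmap d R) (Verts d)" using R_inj by (auto simp: Rmap_def inj_on_def)
    show "Rmap d R ` Verts d = Verts d"
    proof
      show "Rmap d R ` Verts d \<subseteq> Verts d" using R_basic by (auto simp: Rmap_def)
      show "Verts d \<subseteq> Rmap d R ` Verts d"
      proof
        fix u assume "u \<in> Verts d"
        then obtain w where "w \<in> Verts d" "R w = u" using R_surj by blast
        then show "u \<in> Rmap d R ` Verts d" by (auto simp: Rmap_def image_iff)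
      qed
    qed
  qed
  show "\<And>x. x \<notin> Verts d \<Longrightarrow> Rmap d R x = x" by (simp add: Rmap_def)
  show "\<And>v a. v \<in> Verts d \<Longrightarrow> a < d \<Longrightarrow> Rmap d R (nb v a) = nb (Rmap d R v) (P v a)"
    using R_nb by blast
  show "\<And>v. v \<in> Verts d \<Longrightarrow> P v ` {..<d} = {..<d}" using Pim by blast
qed

lemma Rmap_locperm: assumes v: "v \<in> Verts d" and a: "a < d"
  shows "locperm d (Rmap d R) v a = P v a"
proof -
  have "Rmap d R (nb v a) = nb (Rmap d R v) (locperm d (Rmap d R) v a)"
    using aut_nb(2)[OF Rmap_aut v a] .
  moreover have "Rmap d R (nb v a) = nb (Rmap d R v) (P v a)" using R_nb[OF v a] .
  ultimately show ?thesis using nb_inj aut_Verts[OF Rmap_aut v] by metis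
qed

lemma Rmap_length: "v \<in> Verts d \<Longrightarrow> length (Rmap d R v) = length v"
  using R_basic by (simp add: Rmap_def)

lemma Rmap_Nil: "Rmap d R [] = []"
  using R0 by (simp add: Rmap_def)

end

definition cmul :: "(nat \<Rightarrow> nat) \<Rightarrow> (nat \<Rightarrow> nat) set \<Rightarrow> (nat \<Rightarrow> nat) set" where
  "cmul g S = (\<lambda>h. g \<circ> h) ` S"

lemma cmul_comp: "cmul g (cmul h S) = cmul (g \<circ> h) S"
  by (auto simp: cmul_def image_image comp_assoc)

lemma cmul_id: "cmul id S = S"
  by (simp add: cmul_def)

lemma alpha_cmul: "alpha \<beta> n g i = the_inv_into {..<n} \<beta> (cmul g (\<beta> i))"
  by (simp add: alpha_def cmul_def)

lemma cmul_self: "id \<in> S \<Longrightarrow> c \<in> cmul c S"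
  unfolding cmul_def by (rule image_eqI[where x=id]) simp_all

lemma lcosets_cmul: "lcosets F' F = {cmul g F | g. g \<in> F'}"
  by (simp add: lcosets_def cmul_def)

locale pgrp =
  fixes d :: nat and F :: "(nat \<Rightarrow> nat) set"
  assumes pg: "perm_group d F"
begin

lemma perm: "p \<in> F \<Longrightarrow> p permutes {..<d}"
  using pg by (auto simp: perm_group_def)

lemma idF: "id \<in> F"
  using pg by (auto simp: perm_group_def)

lemma compF: "p \<in> F \<Longrightarrow> q \<in> F \<Longrightarrow> p \<circ> q \<in> F"
  using pg by (auto simp: perm_group_def)

lemma invF: "p \<in> F \<Longrightarrow> inv p \<in> F"
  using pg by (auto simp: perm_group_def)

lemma inv_comp: "p \<in> F \<Longrightarrow> p \<circ> inv p = id" "p \<in> F \<Longrightarrow> inv p \<circ> p = id"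
  using permutes_inv_o perm by blast+

lemma cmul_F: assumes "q \<in> F" shows "cmul q F = F"
proof
  show "cmul q F \<subseteq> F" using compF assms by (auto simp: cmul_def)
  show "F \<subseteq> cmul q F"
  proof
    fix h assume h: "h \<in> F"
    have "h = q \<circ> (inv q \<circ> h)" using inv_comp(1)[OF assms] by (simp add: comp_assoc[symmetric])
    moreover have "inv q \<circ> h \<in> F" using compF invF assms h by blast
    ultimately show "h \<in> cmul q F" by (auto simp: cmul_def)
  qed
qed

end

locale setting =
  fixes d n :: nat and F F' :: "(nat \<Rightarrow> nat) set" and \<beta> :: "nat \<Rightarrow> (nat \<Rightarrow> nat) set"
  assumes d3: "d \<ge> 3"
    and F: "perm_group d F" and F': "perm_group d F'" and FF': "F \<subseteq> F'"
    and orb: "preserves_orbits d F F'"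
    and n: "n = card (lcosets F' F)"
    and \<beta>: "bij_betw \<beta> {..<n} (lcosets F' F)" and \<beta>0: "\<beta> 0 = F"
begin

sublocale PF: pgrp d F using F by unfold_locales
sublocale PF': pgrp d F' using F' by unfold_locales

lemma n_pos: "0 < n"
proof -
  have "cmul id F \<in> lcosets F' F" using PF'.idF lcosets_cmul by blast
  then have "lcosets F' F \<noteq> {}" by blast
  then show ?thesis using \<beta> by (auto simp: bij_betw_def)
qed

lemma beta_in: assumes "i < n" shows "\<exists>c\<in>F'. \<beta> i = cmul c F"
proof -
  have "\<beta> i \<in> lcosets F' F" using \<beta> assms by (auto simp: bij_betw_def)
  then show ?thesis unfolding lcosets_cmul by blast
qed

lemma beta_sub: assumes "i < n" shows "\<beta> i \<subseteq> F'"
proof -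
  obtain c where c: "c \<in> F'" "\<beta> i = cmul c F" using beta_in[OF assms] by blast
  then show ?thesis using FF' PF'.compF by (auto simp: cmul_def)
qed

lemma beta_ne: assumes "i < n" shows "\<exists>p. p \<in> \<beta> i"
proof -
  obtain c where c: "c \<in> F'" "\<beta> i = cmul c F" using beta_in[OF assms] by blast
  then have "c \<in> \<beta> i" using PF.idF cmul_self by simp
  then show ?thesis by blast
qed

lemma coset_eq: assumes i: "i < n" and p: "p \<in> \<beta> i" shows "cmul p F = \<beta> i"
proof -
  obtain c where c: "c \<in> F'" "\<beta> i = cmul c F" using beta_in[OF i] by blast
  then obtain q where q: "q \<in> F" "p = c \<circ> q" using p by (auto simp: cmul_def)
  have "cmul p F = cmul c (cmul q F)" using q by (simp add: cmul_comp)
  then show ?thesis using PF.cmul_F[OF q(1)] c by simp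
qed

lemma beta_inj: "i < n \<Longrightarrow> j < n \<Longrightarrow> \<beta> i = \<beta> j \<Longrightarrow> i = j"
  using \<beta> by (auto simp: bij_betw_def dest: inj_onD)

lemma alpha_prop: assumes g: "g \<in> F'" and i: "i < n"
  shows "alpha \<beta> n g i < n" "\<beta> (alpha \<beta> n g i) = cmul g (\<beta> i)"
proof -
  obtain c where c: "c \<in> F'" "\<beta> i = cmul c F" using beta_in[OF i] by blast
  have "cmul g (\<beta> i) = cmul (g \<circ> c) F" using c by (simp add: cmul_comp)
  then have X: "cmul g (\<beta> i) \<in> \<beta> ` {..<n}" using \<beta> PF'.compF[OF g c(1)] lcosets_cmul
    by (auto simp: bij_betw_def)
  have inj: "inj_on \<beta> {..<n}" using \<beta> by (simp add: bij_betw_def)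
  show "alpha \<beta> n g i < n" unfolding alpha_cmul using the_inv_into_into[OF inj X, of "{..<n}"] by simp
  show "\<beta> (alpha \<beta> n g i) = cmul g (\<beta> i)" unfolding alpha_cmul using f_the_inv_into_f[OF inj X] .
qed

lemma alpha_eqI: assumes g: "g \<in> F'" and i: "i < n" and j: "j < n" and e: "\<beta> j = cmul g (\<beta> i)"
  shows "alpha \<beta> n g i = j"
  using alpha_prop[OF g i] beta_inj j e by metis

lemma alpha_comp: assumes g: "g \<in> F'" and h: "h \<in> F'" and i: "i < n"
  shows "alpha \<beta> n (g \<circ> h) i = alpha \<beta> n g (alpha \<beta> n h i)"
proof -
  have 1: "alpha \<beta> n h i < n" "\<beta> (alpha \<beta> n h i) = cmul h (\<beta> i)" using alpha_prop[OF h i] by auto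
  have "\<beta> (alpha \<beta> n g (alpha \<beta> n h i)) = cmul (g \<circ> h) (\<beta> i)"
    using alpha_prop[OF g 1(1)] 1(2) by (simp add: cmul_comp)
  then show ?thesis using alpha_eqI[OF PF'.compF[OF g h] i] alpha_prop(1)[OF g 1(1)] by simp
qed

lemma alpha_id: "i < n \<Longrightarrow> alpha \<beta> n id i = i"
  using alpha_eqI[OF PF'.idF] cmul_id by simp

lemma alpha_mem: assumes p: "p \<in> F'" and i: "i < n" and pi: "p \<in> \<beta> i"
  shows "alpha \<beta> n p 0 = i"
  using alpha_eqI[OF p n_pos i] coset_eq[OF i pi] \<beta>0 by simp

lemma alpha_zero_iff: assumes p: "p \<in> F'" shows "alpha \<beta> n p 0 = 0 \<longleftrightarrow> p \<in> F"
proof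
  assume "alpha \<beta> n p 0 = 0"
  then have "F = cmul p F" using alpha_prop(2)[OF p n_pos] \<beta>0 by simp
  then show "p \<in> F" using PF.idF cmul_self by metis
next
  assume "p \<in> F"
  then show "alpha \<beta> n p 0 = 0" using alpha_mem[OF p n_pos] \<beta>0 by simp
qed

lemma coset_point: assumes i: "i < n" and p: "p \<in> F'" and a: "a < d"
  shows "\<exists>q\<in>\<beta> i. q a = p a"
proof -
  obtain c where c: "c \<in> F'" "\<beta> i = cmul c F" using beta_in[OF i] by blast
  have "inv c \<circ> p \<in> F'" using PF'.compF PF'.invF c(1) p by blast
  then have "\<exists>q\<in>F. q a = (inv c \<circ> p) a" using orb a unfolding preserves_orbits_def by blast
  then obtain q' where q': "q' \<in> F" "q' a = (inv c \<circ> p) a" by blast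
  have "(c \<circ> q') a = p a" using q' permutes_inverses(1)[OF PF'.perm[OF c(1)]] by simp
  moreover have "c \<circ> q' \<in> \<beta> i" using c q' by (auto simp: cmul_def)
  ultimately show ?thesis by blast
qed

lemma coset_point_trans: assumes i: "i < n" and tr: "transitive_on d F" and a: "a < d" and b: "b < d"
  shows "\<exists>q\<in>\<beta> i. q a = b"
proof -
  obtain c where c: "c \<in> F'" "\<beta> i = cmul c F" using beta_in[OF i] by blast
  have "inv c b < d" using permutes_in_image[OF PF'.perm[OF PF'.invF[OF c(1)]]] b by simp
  then obtain q' where q': "q' \<in> F" "q' a = inv c b" using tr a by (auto simp: transitive_on_def)
  have "(c \<circ> q') a = b" using q' permutes_inverses(1)[OF PF'.perm[OF c(1)]] by simp
  moreover have "c \<circ> q' \<in> \<beta> i" using c q' by (auto simp: cmul_def)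
  ultimately show ?thesis by blast
qed

lemma semireg_fix: assumes sr: "semiregular_on d F" and s: "s \<in> F'" and i: "i < n"
  and st: "cmul s (\<beta> i) = \<beta> i" and c: "c < d" and sc: "s c = c"
  shows "s = id"
proof -
  obtain g where g: "g \<in> F'" "\<beta> i = cmul g F" using beta_in[OF i] by blast
  have "g \<in> \<beta> i" using g PF.idF cmul_self by simp
  then have "s \<circ> g \<in> \<beta> i" using st by (auto simp: cmul_def)
  then obtain q where q: "q \<in> F" "s \<circ> g = g \<circ> q" using g by (auto simp: cmul_def)
  have gp: "g permutes {..<d}" using PF'.perm[OF g(1)] .
  define x where "x = inv g c"
  have x: "x < d" "g x = c" using permutes_in_image[OF PF'.perm[OF PF'.invF[OF g(1)]]] c
      permutes_inverses(1)[OF gp] unfolding x_def by auto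
  have "g (q x) = s (g x)" using q(2) by (metis comp_apply)
  then have "g (q x) = g x" using x sc by simp
  then have "q x = x" using permutes_inj[OF gp] by (auto dest: injD)
  then have "q = id" using sr q(1) x(1) by (auto simp: semiregular_on_def)
  then have "s \<circ> g = g" using q by simp
  then have "s \<circ> g \<circ> inv g = g \<circ> inv g" by simp
  then show "s = id" using permutes_inv_o(1)[OF gp] by (simp add: comp_assoc)
qed

lemma locperm_F': "g \<in> GFF d F F' \<Longrightarrow> v \<in> Verts d \<Longrightarrow> locperm d g v \<in> F'"
  by (simp add: GFF_def)

lemma GFF_aut: "g \<in> GFF d F F' \<Longrightarrow> aut d g"
  by (simp add: GFF_def)

definition bad :: "(nat list \<Rightarrow> nat list) \<Rightarrow> nat list set" where
  "bad g = {v \<in> Verts d. locperm d g v \<notin> F}"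

lemma bad_finite: "g \<in> GFF d F F' \<Longrightarrow> finite (bad g)"
  by (simp add: GFF_def bad_def)

lemma GFF_comp: assumes g: "g \<in> GFF d F F'" and h: "h \<in> GFF d F F'" shows "g \<circ> h \<in> GFF d F F'"
proof -
  have ag: "aut d g" and ah: "aut d h" using g h by (simp_all add: GFF_def)
  have lp: "\<And>v. v \<in> Verts d \<Longrightarrow> locperm d (g \<circ> h) v = locperm d g (h v) \<circ> locperm d h v"
    using locperm_comp[OF ag ah] .
  have "{v \<in> Verts d. locperm d (g \<circ> h) v \<notin> F} \<subseteq> bad h \<union> h -` bad g"
    using lp PF.compF aut_Verts[OF ah] by (auto simp: bad_def)
  moreover have "finite (h -` bad g)" using finite_vimageI[OF bad_finite[OF g] aut_inj[OF ah]] .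
  ultimately have "finite {v \<in> Verts d. locperm d (g \<circ> h) v \<notin> F}"
    using bad_finite[OF h] finite_subset by blast
  moreover have "\<forall>v\<in>Verts d. locperm d (g \<circ> h) v \<in> F'"
    using lp PF'.compF locperm_F'[OF g] locperm_F'[OF h] aut_Verts[OF ah] by simp
  ultimately show ?thesis using aut_comp[OF ag ah] by (simp add: GFF_def)
qed

lemma GFF_ginv: assumes g: "g \<in> GFF d F F'" shows "ginv d g \<in> GFF d F F'"
proof -
  have ag: "aut d g" using g by (simp add: GFF_def)
  have gi: "aut d (ginv d g)" using ginv_props(3)[OF ag] .
  have lp: "\<And>u. u \<in> Verts d \<Longrightarrow> locperm d (ginv d g) u = inv (locperm d g (ginv d g u))"
    using locperm_ginv[OF ag] .
  have "{v \<in> Verts d. locperm d (ginv d g) v \<notin> F} \<subseteq> ginv d g -` bad g"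
  proof
    fix u assume u: "u \<in> {v \<in> Verts d. locperm d (ginv d g) v \<notin> F}"
    then have "locperm d g (ginv d g u) \<notin> F" using lp PF.invF by auto
    then show "u \<in> ginv d g -` bad g" using u aut_Verts[OF gi] by (auto simp: bad_def)
  qed
  moreover have "finite (ginv d g -` bad g)" using finite_vimageI[OF bad_finite[OF g] aut_inj[OF gi]] .
  ultimately have "finite {v \<in> Verts d. locperm d (ginv d g) v \<notin> F}" using finite_subset by blast
  moreover have "\<forall>v\<in>Verts d. locperm d (ginv d g) v \<in> F'"
    using lp PF'.invF locperm_F'[OF g] aut_Verts[OF gi] by simp
  ultimately show ?thesis using gi by (simp add: GFF_def)
qed

lemma GFF_id: "id \<in> GFF d F F'"
proof -
  have e: "{v \<in> Verts d. locperm d id v \<notin> F} = {}" using locperm_id PF.idF by auto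
  show ?thesis unfolding GFF_def mem_Collect_eq e
    using aut_id locperm_id PF'.idF by simp
qed

lemma UF_GFF: assumes "g \<in> UF d F" shows "g \<in> GFF d F F'"
proof -
  have e: "{v \<in> Verts d. locperm d g v \<notin> F} = {}" using assms by (auto simp: UF_def)
  show ?thesis unfolding GFF_def mem_Collect_eq e
    using assms FF' by (auto simp: UF_def)
qed

lemma GFFstar_GFF: "g \<in> GFFstar d F F' \<Longrightarrow> g \<in> GFF d F F'"
  by (simp add: GFFstar_def)

lemma GFFstar_comp: assumes g: "g \<in> GFFstar d F F'" and h: "h \<in> GFFstar d F F'"
  shows "g \<circ> h \<in> GFFstar d F F'"
  using GFF_comp g h aut_Verts GFF_aut by (simp add: GFFstar_def)

lemma GFFstar_ginv: assumes g: "g \<in> GFFstar d F F'" shows "ginv d g \<in> GFFstar d F F'"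
proof -
  have g1: "g \<in> GFF d F F'" and ag: "aut d g" using g by (simp_all add: GFFstar_def GFF_def)
  have "\<forall>v\<in>Verts d. even (length (ginv d g v)) = even (length v)"
  proof
    fix v assume v: "v \<in> Verts d"
    have "ginv d g v \<in> Verts d" using aut_Verts[OF ginv_props(3)[OF ag] v] .
    then have "even (length (g (ginv d g v))) = even (length (ginv d g v))"
      using g by (simp add: GFFstar_def)
    then show "even (length (ginv d g v)) = even (length v)" using ginv_apply(1)[OF ag] by simp
  qed
  then show ?thesis using GFF_ginv[OF g1] by (simp add: GFFstar_def)
qed

lemma GFFstar_id: "id \<in> GFFstar d F F'"
  using GFF_id by (simp add: GFFstar_def)

end

context setting
begin

lemma Xverts_iff: "(f, e) \<in> Xverts n d \<longleftrightarrow> (\<forall>v. f v < n) \<and> (\<forall>v. v \<notin> Verts d \<longrightarrow> f v = 0)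
                   \<and> finite {v. f v \<noteq> 0} \<and> e \<in> Edges d"
  by (simp add: Xverts_def)

lemma act_out: "v \<notin> Verts d \<Longrightarrow> fst (act d \<beta> n g x) v = 0"
  by (simp add: act_def)

lemma act_snd: "snd (act d \<beta> n g x) = g ` snd x"
  by (simp add: act_def)

lemma act_char: assumes g: "aut d g" and u: "u \<in> Verts d"
  shows "fst (act d \<beta> n g x) (g u) = alpha \<beta> n (locperm d g u) (fst x u)"
proof -
  have "inv_into (Verts d) g (g u) = u" using inv_into_f_f[OF aut_inj_on[OF g] u] .
  then show ?thesis using aut_Verts[OF g u] by (simp add: act_def)
qed

lemma act_eq_iff: assumes g: "aut d g" and y0: "\<forall>v. v \<notin> Verts d \<longrightarrow> fy v = 0"
  shows "act d \<beta> n g (fx, ex) = (fy, ey) \<longleftrightarrow>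
         (\<forall>w\<in>Verts d. fy (g w) = alpha \<beta> n (locperm d g w) (fx w)) \<and> g ` ex = ey"
proof
  assume h: "act d \<beta> n g (fx, ex) = (fy, ey)"
  have "\<forall>w\<in>Verts d. fy (g w) = alpha \<beta> n (locperm d g w) (fx w)"
  proof
    fix w assume w: "w \<in> Verts d"
    have "fy (g w) = fst (act d \<beta> n g (fx, ex)) (g w)" using h by simp
    also have "\<dots> = alpha \<beta> n (locperm d g w) (fx w)" using act_char[OF g w] by simp
    finally show "fy (g w) = alpha \<beta> n (locperm d g w) (fx w)" .
  qed
  moreover have "g ` ex = ey" using act_snd[of g "(fx,ex)"] h by simp
  ultimately show "(\<forall>w\<in>Verts d. fy (g w) = alpha \<beta> n (locperm d g w) (fx w)) \<and> g ` ex = ey" by blast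
next
  assume h: "(\<forall>w\<in>Verts d. fy (g w) = alpha \<beta> n (locperm d g w) (fx w)) \<and> g ` ex = ey"
  have "fst (act d \<beta> n g (fx, ex)) = fy"
  proof
    fix v show "fst (act d \<beta> n g (fx, ex)) v = fy v"
    proof (cases "v \<in> Verts d")
      case True
      then obtain w where w: "w \<in> Verts d" "g w = v" using aut_surj[OF g] by blast
      then show ?thesis using act_char[OF g w(1), of "(fx, ex)"] h by auto
    next
      case False then show ?thesis using act_out y0 by simp
    qed
  qed
  moreover have "snd (act d \<beta> n g (fx, ex)) = ey" using act_snd h by simp
  ultimately show "act d \<beta> n g (fx, ex) = (fy, ey)" by (metis prod.collapse)
qed

lemma act_Xverts: assumes g: "g \<in> GFF d F F'" and x: "x \<in> Xverts n d"
  shows "act d \<beta> n g x \<in> Xverts n d"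
proof -
  obtain f e where fe: "x = (f, e)" by (cases x)
  have ag: "aut d g" using GFF_aut[OF g] .
  have f: "\<forall>v. f v < n" "\<forall>v. v \<notin> Verts d \<longrightarrow> f v = 0" "finite {v. f v \<noteq> 0}" "e \<in> Edges d"
    using x fe by (simp_all add: Xverts_def)
  define f' where "f' = fst (act d \<beta> n g x)"
  have val: "f' (g w) = alpha \<beta> n (locperm d g w) (f w)" if w: "w \<in> Verts d" for w
  proof -
    have "f' (g w) = alpha \<beta> n (locperm d g w) (fst x w)" unfolding f'_def by (rule act_char[OF ag w])
    then show ?thesis unfolding fe by simp
  qed
  have lt: "\<forall>v. f' v < n"
  proof
    fix v show "f' v < n"
    proof (cases "v \<in> Verts d")
      case True
      then obtain w where w: "w \<in> Verts d" "g w = v" using aut_surj[OF ag] by blast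
      have "f' (g w) < n" unfolding val[OF w(1)]
        by (rule alpha_prop(1)[OF locperm_F'[OF g w(1)] f(1)[rule_format]])
      then show ?thesis using w(2) by simp
    next
      case False then show ?thesis using act_out n_pos unfolding f'_def by simp
    qed
  qed
  have "{v. f' v \<noteq> 0} \<subseteq> g ` {v. f v \<noteq> 0} \<union> g ` bad g"
  proof
    fix v assume v: "v \<in> {v. f' v \<noteq> 0}"
    have vV: "v \<in> Verts d"
    proof (rule ccontr)
      assume "v \<notin> Verts d"
      then have "f' v = 0" unfolding f'_def by (rule act_out)
      then show False using v by simp
    qed
    then obtain w where w: "w \<in> Verts d" "g w = v" using aut_surj[OF ag] by blast
    show "v \<in> g ` {v. f v \<noteq> 0} \<union> g ` bad g"
    proof (cases "f w = 0 \<and> locperm d g w \<in> F")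
      case True
      then have "alpha \<beta> n (locperm d g w) (f w) = 0" using alpha_zero_iff[OF locperm_F'[OF g w(1)]] by simp
      then have "f' v = 0" using val[OF w(1)] w(2) by simp
      then show ?thesis using v by simp
    next
      case False
      then have "w \<in> {v. f v \<noteq> 0} \<or> w \<in> bad g" using w(1) by (auto simp: bad_def)
      then have "g w \<in> g ` {v. f v \<noteq> 0} \<union> g ` bad g" by blast
      then show ?thesis using w(2) by simp
    qed
  qed
  then have "finite {v. f' v \<noteq> 0}" using f(3) bad_finite[OF g] finite_subset by blast
  moreover have "snd (act d \<beta> n g x) \<in> Edges d" using act_snd aut_edges[OF ag f(4)] fe by simp
  moreover have "\<forall>v. v \<notin> Verts d \<longrightarrow> f' v = 0" using act_out unfolding f'_def by simp
  ultimately have "(f', snd (act d \<beta> n g x)) \<in> Xverts n d" using lt by (simp add: Xverts_iff)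
  then show ?thesis unfolding f'_def by simp
qed

lemma act_comp: assumes g: "g \<in> GFF d F F'" and h: "h \<in> GFF d F F'" and x: "x \<in> Xverts n d"
  shows "act d \<beta> n (g \<circ> h) x = act d \<beta> n g (act d \<beta> n h x)"
proof -
  have ag: "aut d g" and ah: "aut d h" using g h GFF_aut by blast+
  have agh: "aut d (g \<circ> h)" using aut_comp[OF ag ah] .
  have fx: "\<forall>v. fst x v < n" using x by (auto simp: Xverts_def)
  have "fst (act d \<beta> n (g \<circ> h) x) = fst (act d \<beta> n g (act d \<beta> n h x))"
  proof
    fix v show "fst (act d \<beta> n (g \<circ> h) x) v = fst (act d \<beta> n g (act d \<beta> n h x)) v"
    proof (cases "v \<in> Verts d")
      case True
      then obtain w where w: "w \<in> Verts d" "(g \<circ> h) w = v" using aut_surj[OF agh] by blast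
      have hw: "h w \<in> Verts d" using aut_Verts[OF ah w(1)] .
      have "fst (act d \<beta> n (g \<circ> h) x) v = alpha \<beta> n (locperm d (g \<circ> h) w) (fst x w)"
        using act_char[OF agh w(1)] w(2) by simp
      also have "\<dots> = alpha \<beta> n (locperm d g (h w) \<circ> locperm d h w) (fst x w)"
        using locperm_comp[OF ag ah w(1)] by simp
      also have "\<dots> = alpha \<beta> n (locperm d g (h w)) (alpha \<beta> n (locperm d h w) (fst x w))"
        using alpha_comp[OF locperm_F'[OF g hw] locperm_F'[OF h w(1)] fx[rule_format]] .
      also have "\<dots> = alpha \<beta> n (locperm d g (h w)) (fst (act d \<beta> n h x) (h w))"
        using act_char[OF ah w(1)] by simp
      also have "\<dots> = fst (act d \<beta> n g (act d \<beta> n h x)) (g (h w))"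
        using act_char[OF ag hw] by simp
      finally show ?thesis using w(2) by simp
    next
      case False then show ?thesis using act_out by simp
    qed
  qed
  moreover have "snd (act d \<beta> n (g \<circ> h) x) = snd (act d \<beta> n g (act d \<beta> n h x))"
    using act_snd by (simp add: image_comp)
  ultimately show ?thesis by (metis prod.collapse)
qed

lemma act_id: assumes x: "x \<in> Xverts n d" shows "act d \<beta> n id x = x"
proof -
  obtain f e where fe: "x = (f, e)" by (cases x)
  have f: "\<forall>v. f v < n" "\<forall>v. v \<notin> Verts d \<longrightarrow> f v = 0" using x fe by (simp_all add: Xverts_def)
  show ?thesis unfolding fe
    using act_eq_iff[OF aut_id f(2)] locperm_id alpha_id f(1) by simp
qed

lemma act_ginv: assumes g: "g \<in> GFF d F F'" and x: "x \<in> Xverts n d"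
  shows "act d \<beta> n (ginv d g) (act d \<beta> n g x) = x"
  using act_comp[OF GFF_ginv[OF g] g x] ginv_props(2)[OF GFF_aut[OF g]] act_id[OF x] by simp

definition orbit :: "((nat list \<Rightarrow> nat) \<times> nat list set) \<Rightarrow> ((nat list \<Rightarrow> nat) \<times> nat list set) set" where
  "orbit x = {act d \<beta> n \<gamma> x | \<gamma>. \<gamma> \<in> GFFstar d F F'}"

lemma orbit_act: assumes g: "g \<in> GFFstar d F F'" and x: "x \<in> Xverts n d"
  shows "orbit (act d \<beta> n g x) = orbit x"
proof
  have g1: "g \<in> GFF d F F'" using GFFstar_GFF[OF g] .
  show "orbit (act d \<beta> n g x) \<subseteq> orbit x"
  proof
    fix y assume "y \<in> orbit (act d \<beta> n g x)"
    then obtain \<delta> where \<delta>: "\<delta> \<in> GFFstar d F F'" "y = act d \<beta> n \<delta> (act d \<beta> n g x)" by (auto simp: orbit_def)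
    then have "y = act d \<beta> n (\<delta> \<circ> g) x" using act_comp[OF GFFstar_GFF[OF \<delta>(1)] g1 x] by simp
    then show "y \<in> orbit x" using GFFstar_comp[OF \<delta>(1) g] by (auto simp: orbit_def)
  qed
  show "orbit x \<subseteq> orbit (act d \<beta> n g x)"
  proof
    fix y assume "y \<in> orbit x"
    then obtain \<delta> where \<delta>: "\<delta> \<in> GFFstar d F F'" "y = act d \<beta> n \<delta> x" by (auto simp: orbit_def)
    have gi: "ginv d g \<in> GFFstar d F F'" using GFFstar_ginv[OF g] .
    have "act d \<beta> n (\<delta> \<circ> ginv d g) (act d \<beta> n g x) = act d \<beta> n \<delta> (act d \<beta> n (ginv d g) (act d \<beta> n g x))"
      using act_comp[OF GFFstar_GFF[OF \<delta>(1)] GFFstar_GFF[OF gi] act_Xverts[OF g1 x]] .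
    then have "y = act d \<beta> n (\<delta> \<circ> ginv d g) (act d \<beta> n g x)" using act_ginv[OF g1 x] \<delta>(2) by simp
    then show "y \<in> orbit (act d \<beta> n g x)" using GFFstar_comp[OF \<delta>(1) gi] by (auto simp: orbit_def)
  qed
qed

end

primrec Qr :: "(nat \<Rightarrow> (nat \<Rightarrow> nat) set) \<Rightarrow> (nat list \<Rightarrow> nat) \<Rightarrow> nat list \<Rightarrow> (nat \<Rightarrow> nat)
    \<Rightarrow> nat list \<Rightarrow> nat list \<times> (nat \<Rightarrow> nat)" where
  "Qr \<beta> f r p0 [] = ([], p0)"
| "Qr \<beta> f r p0 (a # rw) = (let u = fst (Qr \<beta> f r p0 rw); p = snd (Qr \<beta> f r p0 rw); u' = u @ [p a]
      in (u', SOME q. q \<in> \<beta> (f (mult r u')) \<and> q a = p a))"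

context setting
begin

lemma construct:
  assumes x: "(f, e) \<in> Xverts n d" and r: "r \<in> e" and reven: "even (length r)"
    and p0: "p0 \<in> \<beta> (f r)" and a: "a < d" and p0a: "p0 a = ecol e"
  shows "\<exists>\<gamma>\<in>GFFstar d F F'. act d \<beta> n \<gamma> (\<lambda>_. 0, {[], [a]}) = (f, e)"
proof -
  have fx: "\<forall>v. f v < n" "\<forall>v. v \<notin> Verts d \<longrightarrow> f v = 0" "finite {v. f v \<noteq> 0}" "e \<in> Edges d"
    using x by (simp_all add: Xverts_def)
  have rV: "r \<in> Verts d" using Edges_sub[OF fx(4)] r by blast
  define R where "R w = fst (Qr \<beta> f r p0 (rev w))" for w
  define P where "P w = snd (Qr \<beta> f r p0 (rev w))" for w
  have R0: "R [] = []" and P0: "P [] = p0" by (simp_all add: R_def P_def)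
  have Rs: "R (w @ [b]) = R w @ [P w b]" for w b by (simp add: R_def P_def Let_def)
  have Ps: "P (w @ [b]) = (SOME q. q \<in> \<beta> (f (mult r (R (w @ [b])))) \<and> q b = P w b)" for w b
    by (simp add: R_def P_def Let_def)
  have inv: "P w \<in> \<beta> (f (mult r (R w)))" if w: "w \<in> Verts d" for w
    using w
  proof (induction rule: Verts_induct)
    case Nil then show ?case using R0 P0 p0 by simp
  next
    case (snoc w b)
    have b: "b < d" using snoc(1) Verts_snoc by blast
    have "P w \<in> F'" using beta_sub[OF fx(1)[rule_format]] snoc(2) by blast
    then have "\<exists>q. q \<in> \<beta> (f (mult r (R (w @ [b])))) \<and> q b = P w b"
      using coset_point[OF fx(1)[rule_format] _ b] by blast
    then show ?case unfolding Ps by (rule someI_ex[THEN conjunct1])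
  qed
  have PF': "P w \<in> F'" if "w \<in> Verts d" for w using inv[OF that] beta_sub[OF fx(1)[rule_format]] by blast
  have Pc: "P (w @ [b]) b = P w b" if wb: "w @ [b] \<in> Verts d" for w b
  proof -
    have w: "w \<in> Verts d" "b < d" using wb Verts_snoc by blast+
    have "\<exists>q. q \<in> \<beta> (f (mult r (R (w @ [b])))) \<and> q b = P w b"
      using coset_point[OF fx(1)[rule_format] PF'[OF w(1)] w(2)] by blast
    then show ?thesis unfolding Ps by (rule someI_ex[THEN conjunct2])
  qed
  interpret rt: rooted d R P
  proof
    show "R [] = []" by (rule R0)
    show "\<And>w a. w @ [a] \<in> Verts d \<Longrightarrow> R (w @ [a]) = R w @ [P w a]" using Rs by blast
    show "\<And>w. w \<in> Verts d \<Longrightarrow> P w ` {..<d} = {..<d}" using PF' PF'.perm permutes_image by blast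
    show "\<And>w a. w @ [a] \<in> Verts d \<Longrightarrow> P (w @ [a]) a = P w a" using Pc by blast
  qed
  define \<gamma> where "\<gamma> = Lmap d r \<circ> Rmap d R"
  have ag: "aut d \<gamma>" unfolding \<gamma>_def using aut_comp[OF Lmap_aut[OF rV] rt.Rmap_aut] .
  have gw: "\<gamma> w = mult r (R w)" if "w \<in> Verts d" for w
    using that rt.R_basic[OF that] by (simp add: \<gamma>_def Lmap_def Rmap_def)
  have lp: "locperm d \<gamma> w = P w" if w: "w \<in> Verts d" for w
  proof
    fix b
    have "locperm d \<gamma> w = locperm d (Lmap d r) (Rmap d R w) \<circ> locperm d (Rmap d R) w"
      unfolding \<gamma>_def using locperm_comp[OF Lmap_aut[OF rV] rt.Rmap_aut w] .
    also have "\<dots> = locperm d (Rmap d R) w"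
      using Lmap_locperm[OF rV aut_Verts[OF rt.Rmap_aut w]] by simp
    finally have e1: "locperm d \<gamma> w = locperm d (Rmap d R) w" .
    show "locperm d \<gamma> w b = P w b"
    proof (cases "b < d")
      case True then show ?thesis using e1 rt.Rmap_locperm[OF w] by simp
    next
      case False
      then show ?thesis using e1 locperm_out permutes_not_in[OF PF'.perm[OF PF'[OF w]]] by simp
    qed
  qed
  have bad: "bad \<gamma> \<subseteq> \<gamma> -` {v. f v \<noteq> 0}"
  proof
    fix w assume w: "w \<in> bad \<gamma>"
    then have wV: "w \<in> Verts d" and nF: "P w \<notin> F" using lp by (auto simp: bad_def)
    show "w \<in> \<gamma> -` {v. f v \<noteq> 0}"
    proof (rule ccontr)
      assume "w \<notin> \<gamma> -` {v. f v \<noteq> 0}"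
      then have "f (\<gamma> w) = 0" by simp
      then have "P w \<in> \<beta> 0" using inv[OF wV] gw[OF wV] by simp
      then show False using nF \<beta>0 by simp
    qed
  qed
  have fin: "finite (\<gamma> -` {v. f v \<noteq> 0})" using finite_vimageI[OF fx(3) aut_inj[OF ag]] .
  have gGFF: "\<gamma> \<in> GFF d F F'"
    unfolding GFF_def mem_Collect_eq
  proof (intro conjI ag ballI)
    show "\<And>v. v \<in> Verts d \<Longrightarrow> locperm d \<gamma> v \<in> F'" using lp PF' by simp
    show "finite {v \<in> Verts d. locperm d \<gamma> v \<notin> F}" using bad fin finite_subset unfolding bad_def by blast
  qed
  have gstar: "\<gamma> \<in> GFFstar d F F'"
  proof -
    have "\<forall>v\<in>Verts d. even (length (\<gamma> v)) = even (length v)"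
      using gw even_length_mult rt.R_basic reven by simp
    then show ?thesis using gGFF by (simp add: GFFstar_def)
  qed
  have act: "act d \<beta> n \<gamma> (\<lambda>_. 0, {[], [a]}) = (f, e)"
  proof -
    have "\<forall>w\<in>Verts d. f (\<gamma> w) = alpha \<beta> n (locperm d \<gamma> w) 0"
    proof
      fix w assume w: "w \<in> Verts d"
      show "f (\<gamma> w) = alpha \<beta> n (locperm d \<gamma> w) 0"
        using alpha_mem[OF PF'[OF w] fx(1)[rule_format] inv[OF w]] lp[OF w] gw[OF w] by simp
    qed
    moreover have "\<gamma> ` {[], [a]} = e"
    proof -
      have aV: "[] @ [a] \<in> Verts d" unfolding Verts_def using a by simp
      have "R [a] = [p0 a]" using Rs[of "[]" a] R0 P0 by simp
      then have "\<gamma> [a] = nb r (ecol e)" using gw[of "[a]"] aV p0a by (simp add: mult_def)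
      moreover have "\<gamma> [] = r" using gw[of "[]"] R0 by simp
      ultimately have "\<gamma> ` {[], [a]} = {r, nb r (ecol e)}" by simp
      then show ?thesis using edge_at(2)[OF fx(4) r] by simp
    qed
    ultimately show ?thesis using act_eq_iff[OF ag fx(2)] by simp
  qed
  show ?thesis using gstar act by blast
qed

lemma zero_Xverts: assumes "e \<in> Edges d" shows "(\<lambda>_. 0, e) \<in> Xverts n d"
  using assms n_pos by (simp add: Xverts_def)

lemma root_edge: assumes "a < d" shows "{[], [a]} \<in> Edges d"
proof -
  have "nb [] a = [a]" by (simp add: nb_def)
  then have "{[], [a]} = {[], nb [] a}" by simp
  then have "\<exists>v\<in>Verts d. \<exists>b<d. {[], [a]} = {v, nb v b}" using assms Verts_Nil by blast
  then show ?thesis unfolding Edges_iff .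
qed

lemma even_endpoint: assumes e: "e \<in> Edges d" shows "\<exists>r\<in>e. even (length r)"
proof -
  obtain v c where v: "v \<in> Verts d" "c < d" "e = {v, nb v c}" using e Edges_iff by blast
  show ?thesis
  proof (cases "even (length v)")
    case True then show ?thesis using v by blast
  next
    case False then show ?thesis using v even_length_nb[of v c] by blast
  qed
qed

lemma construct_any: assumes x: "x \<in> Xverts n d"
  shows "\<exists>a<d. \<exists>\<gamma>\<in>GFFstar d F F'. act d \<beta> n \<gamma> (\<lambda>_. 0, {[], [a]}) = x"
proof -
  obtain f e where fe: "x = (f, e)" by (cases x)
  have fx: "\<forall>v. f v < n" "e \<in> Edges d" using x fe by (simp_all add: Xverts_def)
  obtain r where r: "r \<in> e" "even (length r)" using even_endpoint[OF fx(2)] by blast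
  obtain p0 where p0: "p0 \<in> \<beta> (f r)" using beta_ne[OF fx(1)[rule_format]] by blast
  have pp: "p0 permutes {..<d}" using PF'.perm beta_sub[OF fx(1)[rule_format]] p0 by blast
  have c: "ecol e < d" using edge_at(1)[OF fx(2) r(1)] .
  define a where "a = inv p0 (ecol e)"
  have a: "a < d" using permutes_in_image[OF permutes_inv[OF pp]] c unfolding a_def by simp
  have "p0 a = ecol e" using permutes_inverses(1)[OF pp] unfolding a_def by simp
  then show ?thesis using construct[OF x[unfolded fe] r p0 a] a fe by blast
qed

lemma construct_trans: assumes x: "x \<in> Xverts n d" and tr: "transitive_on d F"
  shows "\<exists>\<gamma>\<in>GFFstar d F F'. act d \<beta> n \<gamma> (\<lambda>_. 0, {[], [0]}) = x"
proof -
  obtain f e where fe: "x = (f, e)" by (cases x)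
  have fx: "\<forall>v. f v < n" "e \<in> Edges d" using x fe by (simp_all add: Xverts_def)
  obtain r where r: "r \<in> e" "even (length r)" using even_endpoint[OF fx(2)] by blast
  have c: "ecol e < d" using edge_at(1)[OF fx(2) r(1)] .
  have d0: "0 < d" using d3 by simp
  obtain p0 where p0: "p0 \<in> \<beta> (f r)" "p0 0 = ecol e"
    using coset_point_trans[OF fx(1)[rule_format] tr d0 c] by blast
  then show ?thesis using construct[OF x[unfolded fe] r(1) r(2) p0(1) d0 p0(2)] fe by blast
qed

end

context setting
begin

lemma rigid: assumes sr: "semiregular_on d F" and dl: "\<delta> \<in> GFFstar d F F'"
  and x: "(f, e) \<in> Xverts n d" and fixd: "act d \<beta> n \<delta> (f, e) = (f, e)"
  shows "\<delta> = id"
proof -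
  have d1: "\<delta> \<in> GFF d F F'" using GFFstar_GFF[OF dl] .
  have ag: "aut d \<delta>" using GFF_aut[OF d1] .
  have fx: "\<forall>v. f v < n" "\<forall>v. v \<notin> Verts d \<longrightarrow> f v = 0" "e \<in> Edges d"
    using x by (simp_all add: Xverts_def)
  have H: "\<forall>w\<in>Verts d. f (\<delta> w) = alpha \<beta> n (locperm d \<delta> w) (f w)" and He: "\<delta> ` e = e"
    using act_eq_iff[OF ag fx(2), THEN iffD1, OF fixd] by auto
  have par: "even (length (\<delta> v)) = even (length v)" if "v \<in> Verts d" for v
    using dl that by (simp add: GFFstar_def)
  have S: "locperm d \<delta> w = id" if w: "w \<in> Verts d" "\<delta> w = w" and c: "c < d" "locperm d \<delta> w c = c" for w c
  proof -
    have sF: "locperm d \<delta> w \<in> F'" using locperm_F'[OF d1 w(1)] .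
    have "f (\<delta> w) = alpha \<beta> n (locperm d \<delta> w) (f w)" using H w(1) by blast
    then have "alpha \<beta> n (locperm d \<delta> w) (f w) = f w" using w(2) by simp
    then have "\<beta> (f w) = cmul (locperm d \<delta> w) (\<beta> (f w))"
      using alpha_prop(2)[OF sF fx(1)[rule_format, of w]] by simp
    then show ?thesis using semireg_fix[OF sr sF fx(1)[rule_format, of w] _ c] by simp
  qed
  define Q where "Q w \<longleftrightarrow> \<delta> w = w \<and> locperm d \<delta> w = id" for w
  have N: "Q (nb w a)" if w: "w \<in> Verts d" "Q w" and a: "a < d" for w a
  proof -
    have w': "nb w a \<in> Verts d" using nb_Verts[OF w(1) a] .
    have 1: "\<delta> (nb w a) = nb w a" using aut_nb(2)[OF ag w(1) a] w(2) unfolding Q_def by simp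
    have "\<delta> (nb (nb w a) a) = nb (\<delta> (nb w a)) (locperm d \<delta> (nb w a) a)" using aut_nb(2)[OF ag w' a] .
    then have "w = nb (nb w a) (locperm d \<delta> (nb w a) a)" using nb_nb[OF w(1)] 1 w(2) unfolding Q_def by simp
    then have "nb (nb w a) a = nb (nb w a) (locperm d \<delta> (nb w a) a)" using nb_nb[OF w(1)] by simp
    then have "locperm d \<delta> (nb w a) a = a" using nb_inj[OF w'] by metis
    then show ?thesis using S[OF w' 1 a] 1 unfolding Q_def by simp
  qed
  obtain u where u: "u \<in> e" using fx(3) Edges_iff by blast
  define c where "c = ecol e"
  have c: "c < d" "e = {u, nb u c}" using edge_at[OF fx(3) u] unfolding c_def by auto
  have uV: "u \<in> Verts d" using Edges_sub[OF fx(3)] u by blast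
  have "\<delta> u \<in> e" using He u by blast
  moreover have "\<delta> u \<noteq> nb u c" using par[OF uV] even_length_nb[of u c] by auto
  ultimately have du: "\<delta> u = u" using c by auto
  have "\<delta> (nb u c) \<in> e" using He c by blast
  moreover have "\<delta> (nb u c) = nb u (locperm d \<delta> u c)" using aut_nb(2)[OF ag uV c(1)] du by simp
  moreover have "nb u (locperm d \<delta> u c) \<noteq> u" by (rule nb_ne)
  ultimately have "nb u (locperm d \<delta> u c) = nb u c" using c by auto
  then have "locperm d \<delta> u c = c" using nb_inj[OF uV] by metis
  then have Qu: "Q u" using S[OF uV du c(1)] du unfolding Q_def by simp
  have down: "Q []" if "v \<in> Verts d" "Q v" for v
    using that
  proof (induction rule: Verts_induct)
    case Nil then show ?case by simp
  next
    case (snoc v a)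
    have "v \<in> Verts d" "a < d" using snoc(1) Verts_snoc by blast+
    have "Q (nb (v @ [a]) a)" using N[OF snoc(1) snoc(3) \<open>a < d\<close>] .
    then have "Q v" using snoc_nb'[OF snoc(1)] by simp
    then show ?case using snoc(2) by simp
  qed
  have Q0: "Q []" using down[OF uV Qu] .
  have up: "Q w" if "w \<in> Verts d" for w
    using that
  proof (induction rule: Verts_induct)
    case Nil then show ?case using Q0 .
  next
    case (snoc w a)
    have "w \<in> Verts d" "a < d" using snoc(1) Verts_snoc by blast+
    then show ?case using N[OF _ snoc(2)] snoc_nb[OF snoc(1)] by simp
  qed
  show "\<delta> = id"
  proof
    fix x show "\<delta> x = id x"
      using up aut_out[OF ag] unfolding Q_def by (cases "x \<in> Verts d") auto
  qed
qed

lemma unique: assumes sr: "semiregular_on d F" and g1: "\<gamma>1 \<in> GFFstar d F F'" and g2: "\<gamma>2 \<in> GFFstar d F F'"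
  and x: "x \<in> Xverts n d" and e: "act d \<beta> n \<gamma>1 x = act d \<beta> n \<gamma>2 x"
  shows "\<gamma>1 = \<gamma>2"
proof -
  have h1: "\<gamma>1 \<in> GFF d F F'" and h2: "\<gamma>2 \<in> GFF d F F'" using g1 g2 GFFstar_GFF by blast+
  define \<delta> where "\<delta> = ginv d \<gamma>2 \<circ> \<gamma>1"
  have dl: "\<delta> \<in> GFFstar d F F'" unfolding \<delta>_def using GFFstar_comp[OF GFFstar_ginv[OF g2] g1] .
  have "act d \<beta> n \<delta> x = act d \<beta> n (ginv d \<gamma>2) (act d \<beta> n \<gamma>1 x)"
    unfolding \<delta>_def using act_comp[OF GFF_ginv[OF h2] h1 x] .
  also have "\<dots> = x" using e act_ginv[OF h2 x] by simp
  finally have fx: "act d \<beta> n \<delta> x = x" .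
  obtain f e' where fe: "x = (f, e')" by (cases x)
  have "\<delta> = id" using rigid[OF sr dl x[unfolded fe] fx[unfolded fe]] .
  then have "\<gamma>2 \<circ> \<delta> = \<gamma>2" by simp
  moreover have "\<gamma>2 \<circ> \<delta> = \<gamma>1" unfolding \<delta>_def using ginv_props(1)[OF GFF_aut[OF h2]]
    by (simp add: comp_assoc[symmetric])
  ultimately show ?thesis by simp
qed

lemma stabilizer: assumes e: "e \<in> Edges d"
  shows "{\<gamma> \<in> GFF d F F'. act d \<beta> n \<gamma> (\<lambda>_. 0, e) = (\<lambda>_. 0, e)} = {\<gamma> \<in> UF d F. \<gamma> ` e = e}"
proof -
  have z: "\<forall>v. v \<notin> Verts d \<longrightarrow> (\<lambda>_. 0::nat) v = 0" by simp
  show ?thesis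
  proof (intro set_eqI iffI)
    fix \<gamma> assume "\<gamma> \<in> {\<gamma> \<in> GFF d F F'. act d \<beta> n \<gamma> (\<lambda>_. 0, e) = (\<lambda>_. 0, e)}"
    then have g: "\<gamma> \<in> GFF d F F'" and a: "act d \<beta> n \<gamma> (\<lambda>_. 0, e) = (\<lambda>_. 0, e)" by auto
    have ag: "aut d \<gamma>" using GFF_aut[OF g] .
    have H: "\<forall>w\<in>Verts d. 0 = alpha \<beta> n (locperm d \<gamma> w) 0" and He: "\<gamma> ` e = e"
      using act_eq_iff[OF ag z, THEN iffD1, OF a] by auto
    have "\<forall>w\<in>Verts d. locperm d \<gamma> w \<in> F"
    proof
      fix w assume w: "w \<in> Verts d"
      have "alpha \<beta> n (locperm d \<gamma> w) 0 = 0" using H w by simp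
      then show "locperm d \<gamma> w \<in> F" using alpha_zero_iff[OF locperm_F'[OF g w]] by simp
    qed
    then show "\<gamma> \<in> {\<gamma> \<in> UF d F. \<gamma> ` e = e}" using ag He by (simp add: UF_def)
  next
    fix \<gamma> assume "\<gamma> \<in> {\<gamma> \<in> UF d F. \<gamma> ` e = e}"
    then have g: "\<gamma> \<in> UF d F" and He: "\<gamma> ` e = e" by auto
    have g1: "\<gamma> \<in> GFF d F F'" using UF_GFF[OF g] .
    have ag: "aut d \<gamma>" using GFF_aut[OF g1] .
    have "\<forall>w\<in>Verts d. 0 = alpha \<beta> n (locperm d \<gamma> w) 0"
    proof
      fix w assume w: "w \<in> Verts d"
      have "locperm d \<gamma> w \<in> F" using g w by (simp add: UF_def)
      then show "0 = alpha \<beta> n (locperm d \<gamma> w) 0" using alpha_zero_iff[OF locperm_F'[OF g1 w]] by simp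
    qed
    then have "act d \<beta> n \<gamma> (\<lambda>_. 0, e) = (\<lambda>_. 0, e)" by (rule act_eq_iff[OF ag z, THEN iffD2, OF conjI[OF _ He]])
    then show "\<gamma> \<in> {\<gamma> \<in> GFF d F F'. act d \<beta> n \<gamma> (\<lambda>_. 0, e) = (\<lambda>_. 0, e)}" using g1 by simp
  qed
qed

lemma finite_orbits: "finite ((\<lambda>x. {act d \<beta> n \<gamma> x | \<gamma>. \<gamma> \<in> GFFstar d F F'}) ` Xverts n d)"
proof -
  have "(\<lambda>x. {act d \<beta> n \<gamma> x | \<gamma>. \<gamma> \<in> GFFstar d F F'}) ` Xverts n d
        \<subseteq> (\<lambda>a. orbit (\<lambda>_. 0, {[], [a]})) ` {..<d}"
  proof
    fix Ob assume "Ob \<in> (\<lambda>x. {act d \<beta> n \<gamma> x | \<gamma>. \<gamma> \<in> GFFstar d F F'}) ` Xverts n d"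
    then obtain x where x: "x \<in> Xverts n d" "Ob = orbit x" by (auto simp: orbit_def)
    obtain a \<gamma> where a: "a < d" "\<gamma> \<in> GFFstar d F F'" "act d \<beta> n \<gamma> (\<lambda>_. 0, {[], [a]}) = x"
      using construct_any[OF x(1)] by blast
    have "orbit x = orbit (\<lambda>_. 0, {[], [a]})"
      using orbit_act[OF a(2) zero_Xverts[OF root_edge[OF a(1)]]] a(3) by simp
    then show "Ob \<in> (\<lambda>a. orbit (\<lambda>_. 0, {[], [a]})) ` {..<d}" using x(2) a(1) by blast
  qed
  then show ?thesis using finite_subset by blast
qed

lemma transitive: assumes tr: "transitive_on d F" and x: "x \<in> Xverts n d" and y: "y \<in> Xverts n d"
  shows "\<exists>\<gamma>\<in>GFFstar d F F'. act d \<beta> n \<gamma> x = y"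
proof -
  define x0 where "x0 = ((\<lambda>_::nat list. 0::nat), {[], [0::nat]})"
  have d0: "0 < d" using d3 by simp
  have x0: "x0 \<in> Xverts n d" unfolding x0_def using zero_Xverts[OF root_edge[OF d0]] .
  obtain g1 where g1: "g1 \<in> GFFstar d F F'" "act d \<beta> n g1 x0 = x" using construct_trans[OF x tr] x0_def by blast
  obtain g2 where g2: "g2 \<in> GFFstar d F F'" "act d \<beta> n g2 x0 = y" using construct_trans[OF y tr] x0_def by blast
  have h1: "g1 \<in> GFF d F F'" and h2: "g2 \<in> GFF d F F'" using g1 g2 GFFstar_GFF by blast+
  have "act d \<beta> n (g2 \<circ> ginv d g1) x = act d \<beta> n g2 (act d \<beta> n (ginv d g1) (act d \<beta> n g1 x0))"
    using act_comp[OF h2 GFF_ginv[OF h1] x] g1(2) by simp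
  also have "\<dots> = y" using act_ginv[OF h1 x0] g2(2) by simp
  finally show ?thesis using GFFstar_comp[OF g2(1) GFFstar_ginv[OF g1(1)]] by blast
qed

end

lemma len_bound: assumes "finite (A :: nat list set)" shows "\<forall>u\<in>A. length u \<le> Max (insert 0 (length ` A))"
  using assms by (auto intro: Max_ge)

lemma edge_finite: "e \<in> Edges d \<Longrightarrow> finite e"
  by (auto simp: Edges_iff)

locale proper_setup = setting +
  fixes fx fy :: "nat list \<Rightarrow> nat" and ex ey :: "nat list set"
  assumes x: "(fx, ex) \<in> Xverts n d" and y: "(fy, ey) \<in> Xverts n d"
begin

definition "Kx = Max (insert 0 (length ` ex))"
definition "Ky = Max (insert 0 (length ` ey))"
definition "K = Kx + Ky"
definition "Mx = Max (insert 0 (length ` {v. fx v \<noteq> 0}))"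
definition "My = Max (insert 0 (length ` {v. fy v \<noteq> 0}))"

lemma xprops: "\<forall>v. fx v < n" "\<forall>v. v \<notin> Verts d \<longrightarrow> fx v = 0" "finite {v. fx v \<noteq> 0}" "ex \<in> Edges d"
  using x by (simp_all add: Xverts_def)

lemma yprops: "\<forall>v. fy v < n" "\<forall>v. v \<notin> Verts d \<longrightarrow> fy v = 0" "finite {v. fy v \<noteq> 0}" "ey \<in> Edges d"
  using y by (simp_all add: Xverts_def)

lemma Kx: "u \<in> ex \<Longrightarrow> length u \<le> Kx"
  using len_bound[OF edge_finite[OF xprops(4)]] unfolding Kx_def by blast

lemma Ky: "u \<in> ey \<Longrightarrow> length u \<le> Ky"
  using len_bound[OF edge_finite[OF yprops(4)]] unfolding Ky_def by blast

lemma Mx: "fx u \<noteq> 0 \<Longrightarrow> length u \<le> Mx"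
  using len_bound[OF xprops(3)] unfolding Mx_def by blast

lemma My: "fy u \<noteq> 0 \<Longrightarrow> length u \<le> My"
  using len_bound[OF yprops(3)] unfolding My_def by blast

definition "Tset = {g \<in> GFF d F F'. act d \<beta> n g (fx, ex) = (fy, ey)}"

lemma Tset_eq: assumes "g \<in> GFF d F F'" shows "act d \<beta> n g (fx, ex) = (fy, ey) \<longleftrightarrow>
   (\<forall>w\<in>Verts d. fy (g w) = alpha \<beta> n (locperm d g w) (fx w)) \<and> g ` ex = ey"
  using act_eq_iff[OF GFF_aut[OF assms] yprops(2)] .

lemma T_bound: assumes ag: "aut d g" and ge: "g ` ex = ey" and w: "w \<in> Verts d"
  shows "length (g w) \<le> K + length w" "length w \<le> K + length (g w)"
proof -
  obtain u where u: "u \<in> ex" using xprops(4) Edges_iff by blast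
  have uV: "u \<in> Verts d" using Edges_sub[OF xprops(4)] u by blast
  have gu: "g u \<in> ey" using ge u by blast
  show "length (g w) \<le> K + length w"
    using aut_length[OF ag uV w] Kx[OF u] Ky[OF gu] unfolding K_def by linarith
  have gi: "aut d (ginv d g)" using ginv_props(3)[OF ag] .
  have gwV: "g w \<in> Verts d" using aut_Verts[OF ag w] .
  have guV: "g u \<in> Verts d" using aut_Verts[OF ag uV] .
  have "length (ginv d g (g w)) \<le> length (ginv d g (g u)) + length (g u) + length (g w)"
    using aut_length[OF gi guV gwV] .
  then show "length w \<le> K + length (g w)"
    using ginv_apply(2)[OF ag] Kx[OF u] Ky[OF gu] unfolding K_def by simp
qed

lemma bad_T: assumes g: "g \<in> GFF d F F'" and a: "act d \<beta> n g (fx, ex) = (fy, ey)"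
  shows "bad g \<subseteq> {w. fx w \<noteq> 0} \<union> g -` {u. fy u \<noteq> 0}"
proof
  fix w assume w: "w \<in> bad g"
  then have wV: "w \<in> Verts d" and nF: "locperm d g w \<notin> F" by (auto simp: bad_def)
  have e: "fy (g w) = alpha \<beta> n (locperm d g w) (fx w)" using Tset_eq[OF g] a wV by blast
  show "w \<in> {w. fx w \<noteq> 0} \<union> g -` {u. fy u \<noteq> 0}"
  proof (rule ccontr)
    assume "w \<notin> {w. fx w \<noteq> 0} \<union> g -` {u. fy u \<noteq> 0}"
    then have "fx w = 0" "fy (g w) = 0" by auto
    then have "alpha \<beta> n (locperm d g w) 0 = 0" using e by simp
    then show False using nF alpha_zero_iff[OF locperm_F'[OF g wV]] by simp
  qed
qed

lemma bad_T_len: assumes g: "g \<in> GFF d F F'" and a: "act d \<beta> n g (fx, ex) = (fy, ey)"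
  and w: "w \<in> Verts d" and l: "length w > Mx + My + K"
  shows "locperm d g w \<in> F"
proof (rule ccontr)
  assume "locperm d g w \<notin> F"
  then have "w \<in> bad g" using w by (simp add: bad_def)
  then have "fx w \<noteq> 0 \<or> fy (g w) \<noteq> 0" using bad_T[OF g a] by auto
  moreover have ge: "g ` ex = ey" using Tset_eq[OF g] a by blast
  have "length w \<le> K + length (g w)" using T_bound(2)[OF GFF_aut[OF g] ge w] .
  ultimately show False using Mx My l by fastforce
qed

definition A :: "nat list \<Rightarrow> nat list set" where
  "A v = (if v \<in> Verts d then {u \<in> Verts d. length u \<le> K + length v} else {v})"

definition Y :: "(nat list \<Rightarrow> nat list) topology" where
  "Y = product_topology (\<lambda>v. discrete_topology (A v)) UNIV"

lemma topY: "topspace Y = {g. \<forall>v. g v \<in> A v}"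
  unfolding Y_def topspace_product_topology PiE_UNIV_domain Pi_def topspace_discrete_topology by simp

lemma compactY: "compact_space Y"
proof -
  have "\<forall>v. finite (A v)" using finite_Verts_le by (simp add: A_def)
  then show ?thesis unfolding Y_def compact_space_product_topology
    by (simp add: compact_space_discrete_topology)
qed

lemma T_sub: "Tset \<subseteq> topspace Y"
proof
  fix g assume "g \<in> Tset"
  then have g: "g \<in> GFF d F F'" and a: "act d \<beta> n g (fx, ex) = (fy, ey)" by (auto simp: Tset_def)
  have ag: "aut d g" using GFF_aut[OF g] .
  have ge: "g ` ex = ey" using Tset_eq[OF g] a by blast
  have "g v \<in> A v" for v
    using T_bound(1)[OF ag ge] aut_Verts[OF ag] aut_out[OF ag] by (auto simp: A_def)
  then show "g \<in> topspace Y" using topY by simp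
qed

definition Nb :: "(nat list \<Rightarrow> nat list) \<Rightarrow> nat \<Rightarrow> (nat list \<Rightarrow> nat list) set" where
  "Nb g N = PiE UNIV (\<lambda>v. if v \<in> Verts d \<and> length v \<le> N then {g v} else A v)"

lemma Nb_iff: "h \<in> Nb g N \<longleftrightarrow> (\<forall>v. v \<in> Verts d \<and> length v \<le> N \<longrightarrow> h v = g v)
   \<and> (\<forall>v. \<not> (v \<in> Verts d \<and> length v \<le> N) \<longrightarrow> h v \<in> A v)"
  unfolding Nb_def by (auto simp: PiE_UNIV_domain Pi_iff split: if_splits)

lemma Nb_open: assumes g: "g \<in> topspace Y" shows "openin Y (Nb g N)"
  unfolding Y_def Nb_def
proof (rule product_topology_basis)
  show "\<And>i. openin (discrete_topology (A i)) (if i \<in> Verts d \<and> length i \<le> N then {g i} else A i)"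
    using g topY by auto
  have "{i. (if i \<in> Verts d \<and> length i \<le> N then {g i} else A i) \<noteq> topspace (discrete_topology (A i))}
        \<subseteq> {v \<in> Verts d. length v \<le> N}" by auto
  then show "finite {i. (if i \<in> Verts d \<and> length i \<le> N then {g i} else A i) \<noteq> topspace (discrete_topology (A i))}"
    using finite_Verts_le finite_subset by blast
qed

lemma Nb_self: "g \<in> topspace Y \<Longrightarrow> g \<in> Nb g N"
  using topY Nb_iff by auto

lemma Nb_sub: assumes "g \<in> topspace Y" shows "Nb g N \<subseteq> topspace Y"
proof
  fix h assume h: "h \<in> Nb g N"
  have "h v \<in> A v" for v
  proof (cases "v \<in> Verts d \<and> length v \<le> N")
    case True
    have "h v = g v" using h True unfolding Nb_iff by blast
    moreover have "g v \<in> A v" using assms unfolding topY by blast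
    ultimately show ?thesis by simp
  next
    case False then show ?thesis using h unfolding Nb_iff by blast
  qed
  then show "h \<in> topspace Y" using topY by simp
qed

definition agree :: "(nat list \<Rightarrow> nat list) \<Rightarrow> (nat list \<Rightarrow> nat list) \<Rightarrow> nat \<Rightarrow> bool" where
  "agree h g N \<longleftrightarrow> (\<forall>v\<in>Verts d. length v \<le> N \<longrightarrow> h v = g v)"

lemma agree_Nb: "h \<in> topspace Y \<Longrightarrow> h \<in> Nb g N \<longleftrightarrow> agree h g N"
  unfolding agree_def Nb_iff using topY by auto

lemma agree_locperm: assumes "agree h g N" "v \<in> Verts d" "length v + 1 \<le> N"
  shows "locperm d h v = locperm d g v"
proof (rule locperm_local)
  show "h v = g v" using assms unfolding agree_def by simp
  fix a assume a: "a < d"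
  have "nb v a \<in> Verts d" using nb_Verts assms(2) a by blast
  moreover have "length (nb v a) \<le> N" using length_nb[of v a] assms(3) by auto
  ultimately show "h (nb v a) = g (nb v a)" using assms(1) unfolding agree_def by simp
qed

lemma limit: assumes gY: "g \<in> topspace Y" and H: "\<And>N. \<exists>h\<in>Tset. agree h g N"
  shows "g \<in> Tset"
proof -
  have gA: "g v \<in> A v" for v using gY topY by simp
  have gV: "g v \<in> Verts d" if "v \<in> Verts d" for v using gA[of v] that by (simp add: A_def)
  have gout: "g v = v" if "v \<notin> Verts d" for v using gA[of v] that by (simp add: A_def)
  have hT: "h \<in> GFF d F F'" "aut d h" "act d \<beta> n h (fx, ex) = (fy, ey)" "h ` ex = ey" if "h \<in> Tset" for h
    using that GFF_aut Tset_eq by (auto simp: Tset_def)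
  have inj: "inj_on g (Verts d)"
  proof (rule inj_onI)
    fix v w assume v: "v \<in> Verts d" and w: "w \<in> Verts d" and e: "g v = g w"
    obtain h where h: "h \<in> Tset" "agree h g (length v + length w)" using H by blast
    then have "h v = h w" using v w e unfolding agree_def by simp
    then show "v = w" using aut_inj_on[OF hT(2)[OF h(1)]] v w by (auto dest: inj_onD)
  qed
  have surj: "Verts d \<subseteq> g ` Verts d"
  proof
    fix u assume u: "u \<in> Verts d"
    obtain h where h: "h \<in> Tset" "agree h g (K + length u)" using H by blast
    obtain w where w: "w \<in> Verts d" "h w = u" using aut_surj[OF hT(2)[OF h(1)] u] by blast
    have "length w \<le> K + length u" using T_bound(2)[OF hT(2,4)[OF h(1)] w(1)] w(2) by simp
    then have "g w = u" using h(2) w unfolding agree_def by auto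
    then show "u \<in> g ` Verts d" using w(1) by blast
  qed
  have bij: "bij_betw g (Verts d) (Verts d)"
    unfolding bij_betw_def using inj surj gV by auto
  have ag: "aut d g"
    unfolding aut_def
  proof (intro conjI bij ballI allI impI)
    fix x assume "x \<notin> Verts d" then show "g x = x" by (rule gout)
  next
    fix v w assume v: "v \<in> Verts d" and w: "w \<in> Verts d"
    obtain h where h: "h \<in> Tset" "agree h g (length v + length w)" using H by blast
    have "h v = g v" "h w = g w" using h(2) v w unfolding agree_def by auto
    then show "({g v, g w} \<in> Edges d) = ({v, w} \<in> Edges d)"
      using aut_edge[OF hT(2)[OF h(1)] v w] by simp
  qed
  have lp: "\<exists>h\<in>Tset. locperm d g v = locperm d h v \<and> g v = h v" if v: "v \<in> Verts d" for v
  proof -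
    obtain h where h: "h \<in> Tset" "agree h g (length v + 1)" using H by blast
    have "locperm d g v = locperm d h v" using agree_locperm[OF h(2) v] by simp
    moreover have "g v = h v" using h(2) v unfolding agree_def by simp
    ultimately show ?thesis using h(1) by blast
  qed
  have F'g: "\<forall>v\<in>Verts d. locperm d g v \<in> F'"
    using lp locperm_F' hT(1) by metis
  have eqs: "\<forall>w\<in>Verts d. fy (g w) = alpha \<beta> n (locperm d g w) (fx w)"
  proof
    fix w assume w: "w \<in> Verts d"
    obtain h where h: "h \<in> Tset" "locperm d g w = locperm d h w" "g w = h w" using lp[OF w] by blast
    have "fy (h w) = alpha \<beta> n (locperm d h w) (fx w)" using Tset_eq[OF hT(1)[OF h(1)]] hT(3)[OF h(1)] w by blast
    then show "fy (g w) = alpha \<beta> n (locperm d g w) (fx w)" using h by simp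
  qed
  have gex: "g ` ex = ey"
  proof -
    obtain h where h: "h \<in> Tset" "agree h g Kx" using H by blast
    have "\<forall>u\<in>ex. h u = g u" using h(2) Kx Edges_sub[OF xprops(4)] unfolding agree_def by blast
    then have "g ` ex = h ` ex" by auto
    then show ?thesis using hT(4)[OF h(1)] by simp
  qed
  have act: "act d \<beta> n g (fx, ex) = (fy, ey)"
    using act_eq_iff[OF ag yprops(2), THEN iffD2, OF conjI[OF eqs gex]] .
  have "{v \<in> Verts d. locperm d g v \<notin> F} \<subseteq> {w. fx w \<noteq> 0} \<union> g -` {u. fy u \<noteq> 0}"
  proof
    fix w assume w: "w \<in> {v \<in> Verts d. locperm d g v \<notin> F}"
    show "w \<in> {w. fx w \<noteq> 0} \<union> g -` {u. fy u \<noteq> 0}"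
    proof (rule ccontr)
      assume "w \<notin> {w. fx w \<noteq> 0} \<union> g -` {u. fy u \<noteq> 0}"
      then have "fx w = 0" "fy (g w) = 0" by auto
      then have "alpha \<beta> n (locperm d g w) 0 = 0" using eqs w by auto
      then show False using w alpha_zero_iff F'g by auto
    qed
  qed
  moreover have "finite ({w. fx w \<noteq> 0} \<union> g -` {u. fy u \<noteq> 0})"
    using xprops(3) finite_vimageI[OF yprops(3) aut_inj[OF ag]] by simp
  ultimately have "finite {v \<in> Verts d. locperm d g v \<notin> F}" using finite_subset by blast
  then have "g \<in> GFF d F F'" using ag F'g by (simp add: GFF_def)
  then show ?thesis using act by (simp add: Tset_def)
qed

lemma closedT: "closedin Y Tset"
  unfolding closedin_def
proof (intro conjI T_sub)
  show "openin Y (topspace Y - Tset)"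
  proof (subst openin_subopen, intro ballI)
    fix g assume g: "g \<in> topspace Y - Tset"
    have "\<exists>N. \<forall>h\<in>Tset. \<not> agree h g N"
    proof (rule ccontr)
      assume "\<not> (\<exists>N. \<forall>h\<in>Tset. \<not> agree h g N)"
      then have H: "\<And>N. \<exists>h\<in>Tset. agree h g N" by blast
      have "g \<in> Tset" using limit[OF _ H] g by blast
      then show False using g by blast
    qed
    then obtain N where N: "\<forall>h\<in>Tset. \<not> agree h g N" by blast
    have "Nb g N \<subseteq> topspace Y - Tset"
    proof
      fix h assume h: "h \<in> Nb g N"
      then have "h \<in> topspace Y" using Nb_sub g by blast
      then have "agree h g N" using agree_Nb h by blast
      then have "h \<notin> Tset" using N by blast
      then show "h \<in> topspace Y - Tset" using \<open>h \<in> topspace Y\<close> by blast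
    qed
    moreover have "openin Y (Nb g N)" using Nb_open g by blast
    moreover have "g \<in> Nb g N" using Nb_self g by blast
    ultimately show "\<exists>T. openin Y T \<and> g \<in> T \<and> T \<subseteq> topspace Y - Tset" by blast
  qed
qed

lemma compactT: "compactin Y Tset"
  using closedin_compact_space[OF compactY closedT] .

end

context setting
begin

definition Bs :: "(nat list \<Rightarrow> nat list) set set" where
  "Bs = {(\<lambda>k. h \<circ> k) ` {k \<in> UF d F. \<forall>s\<in>S. k s = s} | h S.
           h \<in> GFF d F F' \<and> finite S \<and> S \<subseteq> Verts d}"

lemma GFF_top_Bs: "GFF_top d F F' = subtopology (topology_generated_by Bs) (GFF d F F')"
  by (simp add: GFF_top_def Bs_def)

lemma id_UF: "id \<in> UF d F"
  using aut_id locperm_id PF.idF by (simp add: UF_def)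

lemma GFF_Bs: "GFF d F F' \<subseteq> \<Union>Bs"
proof
  fix h assume h: "h \<in> GFF d F F'"
  have "h \<in> (\<lambda>k. h \<circ> k) ` {k \<in> UF d F. \<forall>s\<in>{}. k s = s}"
    using id_UF by (intro image_eqI[where x = id]) auto
  moreover have "(\<lambda>k. h \<circ> k) ` {k \<in> UF d F. \<forall>s\<in>{}. k s = s} \<in> Bs"
    unfolding Bs_def using h by blast
  ultimately show "h \<in> \<Union>Bs" by blast
qed

lemma topspace_GFF_top: "topspace (GFF_top d F F') = GFF d F F'"
  unfolding GFF_top_Bs using GFF_Bs by auto

lemma UF_comp: assumes "g \<in> UF d F" "h \<in> UF d F" shows "g \<circ> h \<in> UF d F"
  using assms aut_comp locperm_comp PF.compF aut_Verts by (simp add: UF_def)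

end

context proper_setup
begin

lemma key: assumes h: "h \<in> GFF d F F'" and S: "finite S" "S \<subseteq> Verts d"
  and g0: "g0 \<in> (\<lambda>k. h \<circ> k) ` {k \<in> UF d F. \<forall>s\<in>S. k s = s}" "g0 \<in> Tset"
  shows "\<exists>N. \<forall>g\<in>Tset. agree g g0 N \<longrightarrow> g \<in> (\<lambda>k. h \<circ> k) ` {k \<in> UF d F. \<forall>s\<in>S. k s = s}"
proof -
  have ah: "aut d h" using GFF_aut[OF h] .
  have ahi: "aut d (ginv d h)" using ginv_props(3)[OF ah] .
  obtain k0 where k0: "k0 \<in> UF d F" "\<forall>s\<in>S. k0 s = s" "g0 = h \<circ> k0" using g0(1) by blast
  have k0e: "k0 = ginv d h \<circ> g0" using k0(3) ginv_props(2)[OF ah] by (simp add: comp_assoc[symmetric])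
  have g0T: "g0 \<in> GFF d F F'" using g0(2) by (simp add: Tset_def)
  define Mh where "Mh = Max (insert 0 (length ` (h ` bad h)))"
  have Mh: "\<forall>u\<in>h ` bad h. length u \<le> Mh" unfolding Mh_def using len_bound bad_finite[OF h] by blast
  define MS where "MS = Max (insert 0 (length ` S))"
  have MS: "\<forall>u\<in>S. length u \<le> MS" unfolding MS_def using len_bound S(1) by blast
  define N where "N = Mx + My + Mh + MS + 2 * K + 1"
  have "\<forall>g\<in>Tset. agree g g0 N \<longrightarrow> g \<in> (\<lambda>k. h \<circ> k) ` {k \<in> UF d F. \<forall>s\<in>S. k s = s}"
  proof (intro ballI impI)
    fix g assume gT: "g \<in> Tset" and ag0: "agree g g0 N"
    have g: "g \<in> GFF d F F'" and ga: "act d \<beta> n g (fx, ex) = (fy, ey)" using gT by (auto simp: Tset_def)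
    have ag: "aut d g" using GFF_aut[OF g] .
    have ge: "g ` ex = ey" using Tset_eq[OF g] ga by blast
    define k where "k = ginv d h \<circ> g"
    have ak: "aut d k" unfolding k_def using aut_comp[OF ahi ag] .
    have gk: "g = h \<circ> k" unfolding k_def using ginv_props(1)[OF ah] by (simp add: comp_assoc[symmetric])
    have lpk: "locperm d k w \<in> F" if w: "w \<in> Verts d" for w
    proof (cases "length w + 1 \<le> N")
      case True
      have gw: "g w = g0 w" using ag0 w True unfolding agree_def by simp
      have "locperm d k w = locperm d (ginv d h) (g w) \<circ> locperm d g w"
        unfolding k_def using locperm_comp[OF ahi ag w] .
      also have "\<dots> = locperm d (ginv d h) (g0 w) \<circ> locperm d g0 w"
        using agree_locperm[OF ag0 w True] gw by simp
      also have "\<dots> = locperm d k0 w"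
        using locperm_comp[OF ahi GFF_aut[OF g0T] w] k0e by simp
      finally show ?thesis using k0(1) w by (simp add: UF_def)
    next
      case False
      have gwV: "g w \<in> Verts d" using aut_Verts[OF ag w] .
      have lw: "length w > Mx + My + K" using False unfolding N_def by linarith
      have 1: "locperm d g w \<in> F" using bad_T_len[OF g ga w lw] .
      have 2: "locperm d h (ginv d h (g w)) \<in> F"
      proof (rule ccontr)
        assume nF: "locperm d h (ginv d h (g w)) \<notin> F"
        have "ginv d h (g w) \<in> bad h" using nF aut_Verts[OF ahi gwV] by (simp add: bad_def)
        then have "h (ginv d h (g w)) \<in> h ` bad h" by blast
        then have gwb: "g w \<in> h ` bad h" unfolding ginv_apply(1)[OF ah] .
        have "length (g w) \<le> Mh" using Mh[rule_format, OF gwb] .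
        moreover have "length w \<le> K + length (g w)" using T_bound(2)[OF ag ge w] .
        ultimately show False using False unfolding N_def by linarith
      qed
      have "locperm d k w = inv (locperm d h (ginv d h (g w))) \<circ> locperm d g w"
        unfolding k_def using locperm_comp[OF ahi ag w] locperm_ginv[OF ah gwV] by simp
      moreover have "inv (locperm d h (ginv d h (g w))) \<circ> locperm d g w \<in> F"
        using PF.compF[OF PF.invF[OF 2] 1] .
      ultimately show ?thesis by simp
    qed
    have fixS: "\<forall>s\<in>S. k s = s"
    proof
      fix s assume s: "s \<in> S"
      have "length s \<le> MS" using MS s by blast
      then have "length s \<le> N" unfolding N_def by linarith
      then have "g s = g0 s" using ag0 s S(2) unfolding agree_def by blast
      then have "k s = k0 s" unfolding k_def k0e by simp
      then show "k s = s" using k0(2) s by simp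
    qed
    have "k \<in> UF d F" using ak lpk by (simp add: UF_def)
    then have "k \<in> {k \<in> UF d F. \<forall>s\<in>S. k s = s}" using fixS by blast
    then show "g \<in> (\<lambda>k. h \<circ> k) ` {k \<in> UF d F. \<forall>s\<in>S. k s = s}"
      using gk by (intro image_eqI[where x = k]) simp_all
  qed
  then show ?thesis by blast
qed

lemma open_piece: assumes h: "h \<in> GFF d F F'" and S: "finite S" "S \<subseteq> Verts d"
  shows "openin (subtopology Y Tset) ((\<lambda>k. h \<circ> k) ` {k \<in> UF d F. \<forall>s\<in>S. k s = s} \<inter> Tset)"
  (is "openin _ (?U \<inter> Tset)")
proof (subst openin_subopen, intro ballI)
  fix g0 assume g0: "g0 \<in> ?U \<inter> Tset"
  then obtain N where N: "\<forall>g\<in>Tset. agree g g0 N \<longrightarrow> g \<in> ?U" using key[OF h S] by blast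
  have g0Y: "g0 \<in> topspace Y" using T_sub g0 by blast
  have "openin (subtopology Y Tset) (Nb g0 N \<inter> Tset)"
    unfolding openin_subtopology using Nb_open[OF g0Y] by blast
  moreover have "g0 \<in> Nb g0 N \<inter> Tset" using Nb_self[OF g0Y] g0 by blast
  moreover have "Nb g0 N \<inter> Tset \<subseteq> ?U \<inter> Tset"
  proof
    fix g assume g: "g \<in> Nb g0 N \<inter> Tset"
    then have "agree g g0 N" using agree_Nb T_sub by blast
    then show "g \<in> ?U \<inter> Tset" using N g by blast
  qed
  ultimately show "\<exists>T. openin (subtopology Y Tset) T \<and> g0 \<in> T \<and> T \<subseteq> ?U \<inter> Tset" by blast
qed

lemma cont: "continuous_map (subtopology Y Tset) (GFF_top d F F') id"
  unfolding GFF_top_Bs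
proof (rule continuous_map_into_subtopology)
  have ts: "topspace (subtopology Y Tset) = Tset" using T_sub by auto
  show "id \<in> topspace (subtopology Y Tset) \<rightarrow> GFF d F F'" using ts by (auto simp: Tset_def)
  show "continuous_map (subtopology Y Tset) (topology_generated_by Bs) id"
  proof (rule continuous_on_generated_topo)
    fix U assume "U \<in> Bs"
    then obtain h S where hS: "U = (\<lambda>k. h \<circ> k) ` {k \<in> UF d F. \<forall>s\<in>S. k s = s}"
      "h \<in> GFF d F F'" "finite S" "S \<subseteq> Verts d" unfolding Bs_def by blast
    have "id -` U \<inter> topspace (subtopology Y Tset) = U \<inter> Tset" using ts by simp
    then show "openin (subtopology Y Tset) (id -` U \<inter> topspace (subtopology Y Tset))"
      using open_piece[OF hS(2-4)] hS(1) by simp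
  next
    show "id ` topspace (subtopology Y Tset) \<subseteq> \<Union>Bs" using ts GFF_Bs by (auto simp: Tset_def)
  qed
qed

lemma compact_transporter: "compactin (GFF_top d F F') {g \<in> topspace (GFF_top d F F'). act d \<beta> n g (fx, ex) = (fy, ey)}"
proof -
  have "compactin (subtopology Y Tset) Tset" using compactT compactin_subtopology by blast
  then have "compactin (GFF_top d F F') (id ` Tset)" using image_compactin cont by blast
  moreover have "{g \<in> topspace (GFF_top d F F'). act d \<beta> n g (fx, ex) = (fy, ey)} = Tset"
    using topspace_GFF_top by (simp add: Tset_def)
  ultimately show ?thesis by simp
qed

end

context setting
begin

lemma proper: "proper_action (GFF_top d F F') (act d \<beta> n) (Xverts n d)"
  unfolding proper_action_def
proof (intro ballI)
  fix x y assume x: "x \<in> Xverts n d" and y: "y \<in> Xverts n d"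
  obtain fx ex where fx: "x = (fx, ex)" by (cases x)
  obtain fy ey where fy: "y = (fy, ey)" by (cases y)
  interpret ps: proper_setup d n F F' \<beta> fx fy ex ey
    using x y fx fy by unfold_locales simp_all
  show "compactin (GFF_top d F F') {g \<in> topspace (GFF_top d F F'). act d \<beta> n g x = y}"
    using ps.compact_transporter fx fy by simp
qed

end

theorem proposition2:
  fixes d n :: nat and F F' :: "(nat \<Rightarrow> nat) set"
    and \<beta> :: "nat \<Rightarrow> (nat \<Rightarrow> nat) set"
  assumes d3: "d \<ge> 3"
    and F: "perm_group d F" and F': "perm_group d F'" and FF': "F \<subseteq> F'"
    and orb: "preserves_orbits d F F'"
    and n: "n = card (lcosets F' F)"
    and \<beta>: "bij_betw \<beta> {..<n} (lcosets F' F)" and \<beta>0: "\<beta> 0 = F"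
  shows
    "finite ((\<lambda>x. {act d \<beta> n \<gamma> x | \<gamma>. \<gamma> \<in> GFFstar d F F'}) ` Xverts n d)
     \<and> (transitive_on d F \<longrightarrow>
          (\<forall>x\<in>Xverts n d. \<forall>y\<in>Xverts n d. \<exists>\<gamma>\<in>GFFstar d F F'. act d \<beta> n \<gamma> x = y))
     \<and> (\<forall>e\<in>Edges d. {\<gamma> \<in> GFF d F F'. act d \<beta> n \<gamma> (\<lambda>_. 0, e) = (\<lambda>_. 0, e)}
                     = {\<gamma> \<in> UF d F. \<gamma> ` e = e})
     \<and> proper_action (GFF_top d F F') (act d \<beta> n) (Xverts n d)
     \<and> (regular_on d F \<longrightarrow>
          (\<forall>x\<in>Xverts n d. \<forall>y\<in>Xverts n d. \<exists>!\<gamma>. \<gamma> \<in> GFFstar d F F' \<and> act d \<beta> n \<gamma> x = y))"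
proof -
  interpret S: setting d n F F' \<beta>
    using assms by unfold_locales
  have R: "\<forall>x\<in>Xverts n d. \<forall>y\<in>Xverts n d. \<exists>!\<gamma>. \<gamma> \<in> GFFstar d F F' \<and> act d \<beta> n \<gamma> x = y"
    if reg: "regular_on d F"
  proof (intro ballI)
    fix x y assume x: "x \<in> Xverts n d" and y: "y \<in> Xverts n d"
    have tr: "transitive_on d F" and sr: "semiregular_on d F" using reg by (auto simp: regular_on_def)
    obtain \<gamma> where g: "\<gamma> \<in> GFFstar d F F'" "act d \<beta> n \<gamma> x = y" using S.transitive[OF tr x y] by blast
    show "\<exists>!\<gamma>. \<gamma> \<in> GFFstar d F F' \<and> act d \<beta> n \<gamma> x = y"
    proof (rule ex1I[where a = \<gamma>])
      show "\<gamma> \<in> GFFstar d F F' \<and> act d \<beta> n \<gamma> x = y" using g by blast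
      fix \<delta> assume dl: "\<delta> \<in> GFFstar d F F' \<and> act d \<beta> n \<delta> x = y"
      then have "act d \<beta> n \<delta> x = act d \<beta> n \<gamma> x" using g(2) by simp
      then show "\<delta> = \<gamma>" using S.unique[OF sr conjunct1[OF dl] g(1) x] by blast
    qed
  qed
  have B: "transitive_on d F \<longrightarrow>
          (\<forall>x\<in>Xverts n d. \<forall>y\<in>Xverts n d. \<exists>\<gamma>\<in>GFFstar d F F'. act d \<beta> n \<gamma> x = y)"
    using S.transitive by blast
  have C: "\<forall>e\<in>Edges d. {\<gamma> \<in> GFF d F F'. act d \<beta> n \<gamma> (\<lambda>_. 0, e) = (\<lambda>_. 0, e)}
                     = {\<gamma> \<in> UF d F. \<gamma> ` e = e}"
    using S.stabilizer by blast
  have E: "regular_on d F \<longrightarrow>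
          (\<forall>x\<in>Xverts n d. \<forall>y\<in>Xverts n d. \<exists>!\<gamma>. \<gamma> \<in> GFFstar d F F' \<and> act d \<beta> n \<gamma> x = y)"
    using R by blast
  show ?thesis
    using S.finite_orbits B C S.proper E by (intro conjI)
qed

end
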